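(* Let $R\subseteq\mathbb N$ be a congruence-periodic sparse predicate, $d\in\mathbb N^+$, $\tilde R\subseteq^dR$, $n\in\mathbb N^+$, $\mathbf A$ an $n$-tuple of operators all $\neq_R0$, and $\Delta\in d\mathbb N$ sufficiently large. Then there is $\Lambda\in\mathbb N$ such that the following holds: for all $s,t,x\in\mathbb Z$ with $s\le t<x-\min\mathbf A\cdot\tilde R^n_\Delta$ if $A_1>_R0$ (respectively $s\ge t>x-\max\mathbf A\cdot\tilde R^n_\Delta$ if $A_1<_R0$), either (i) $P^1_\Delta(x-s;\mathbf A,\tilde R)=\sigma^\delta P^1_\Delta(x-t;\mathbf A,\tilde R)$ for some $0\le\delta\le\Lambda$, or (ii) $P^1_\Delta(x-s;\mathbf A,\tilde R)=\sigma^\varepsilon P^1_\Delta(t-s;\mathbf A,\tilde R)$ for some $0\le\varepsilon\le\Lambda$.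
   Context: Let $R\subseteq\mathbb N$ be infinite, enumerated increasingly as $(r_n)$; $\sigma:R\to R$ is the successor map, $\sigma^k$ its iterate ($\sigma^0=\mathrm{id}$). An operator on $R$ is $z\mapsto\sum_{i=0}^ma_i\sigma^i(z)$, $a_i\in\mathbb Z$. $A=_R0$: $Az=0$ for all $z\in R$; $A>_R0$ (resp. $<_R0$): $Az>0$ (resp. $<0$) for cofinitely many $z$. $R$ sparse: every operator satisfies (S1) $A=_R0$ or $A>_R0$ or $A<_R0$; (S2) if $A>_R0$ there is $\Delta$ with $A(\sigma^\Delta z)>z$ for all $z$. Congruence-periodic: $(r_n\bmod m)$ eventually periodic for each $m\ge1$. $\tilde R\subseteq^dR$: $\tilde R=\{r_{N+dt}:t\in\mathbb N\}$ for some $N$. $\mathbf A\cdot z=\sum A_iz_i$, $\mathbf A\cdot S=\{\mathbf A\cdot z:z\in S\}$. $\tilde R^n_\Delta=\{z\in\tilde R^n:z_i\ge\sigma^\Delta z_{i+1}\ (1\le i\le n)\}$, $z_{n+1}:=\min\tilde R$. For $\mathbf A$ with entries $\neq_R0$ and $\Delta$ large enough that $z\mapsto\mathbf A\cdot z$ is injective on $R^n_\Delta$, $P_\Delta(x;\mathbf A,\tilde R)$ is the $z\in\tilde R^n_\Delta$ with largest $\mathbf A\cdot z$ subject to $\mathbf A\cdot z<x$ if $x>\inf\mathbf A\cdot\tilde R^n_\Delta$, and otherwise the $z\in\tilde R^n_\Delta$ minimising $\mathbf A\cdot z$; $P^1_\Delta$ is its first coordinate. "$\Delta\in d\mathbb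 N$ sufficiently large" means $\Delta\ge\Delta_0$ for some suitable $\Delta_0$. *)

theory Defs
  imports Main "HOL-Library.Infinite_Set"
begin

definition succR :: "nat set \<Rightarrow> nat \<Rightarrow> nat" where
  "succR R z = (LEAST y. y \<in> R \<and> z < y)"

definition opApp :: "nat set \<Rightarrow> int list \<Rightarrow> nat \<Rightarrow> int" where
  "opApp R A z = (\<Sum>i<length A. A ! i * int ((succR R ^^ i) z))"

definition opZero :: "nat set \<Rightarrow> int list \<Rightarrow> bool" where
  "opZero R A \<longleftrightarrow> (\<forall>z\<in>R. opApp R A z = 0)"

definition opPos :: "nat set \<Rightarrow> int list \<Rightarrow> bool" where
  "opPos R A \<longleftrightarrow> finite {z\<in>R. \<not> (opApp R A z > 0)}"

definition opNeg :: "nat set \<Rightarrow> int list \<Rightarrow> bool" where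
  "opNeg R A \<longleftrightarrow> finite {z\<in>R. \<not> (opApp R A z < 0)}"

definition sparse :: "nat set \<Rightarrow> bool" where
  "sparse R \<longleftrightarrow> (\<forall>A. (opZero R A \<or> opPos R A \<or> opNeg R A) \<and>
     (opPos R A \<longrightarrow> (\<exists>D. \<forall>z\<in>R. opApp R A ((succR R ^^ D) z) > int z)))"

definition cong_periodic :: "nat set \<Rightarrow> bool" where
  "cong_periodic R \<longleftrightarrow> (\<forall>m\<ge>1. \<exists>N p. p > 0 \<and>
     (\<forall>k\<ge>N. enumerate R (k + p) mod m = enumerate R k mod m))"

definition sub_d :: "nat set \<Rightarrow> nat \<Rightarrow> nat set \<Rightarrow> bool" where
  "sub_d Rt d R \<longleftrightarrow> (\<exists>N. Rt = {enumerate R (N + d * t) | t. True})"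

definition dotA :: "nat set \<Rightarrow> int list list \<Rightarrow> nat list \<Rightarrow> int" where
  "dotA R As z = (\<Sum>i<length As. opApp R (As ! i) (z ! i))"

text \<open>The set tilde R^n_Delta; tuples are lists of length n (index 0 = first
  coordinate), sigma is the successor on R, z_{n+1} := min Rt.\<close>
definition tupSet :: "nat set \<Rightarrow> nat set \<Rightarrow> nat \<Rightarrow> nat \<Rightarrow> nat list set" where
  "tupSet R Rt n D = {z. length z = n \<and> (\<forall>i<n. z ! i \<in> Rt) \<and>
     (\<forall>i<n. z ! i \<ge> (succR R ^^ D) (if Suc i < n then z ! Suc i else Min Rt))}"

definition Pdelta :: "nat set \<Rightarrow> nat set \<Rightarrow> int list list \<Rightarrow> nat \<Rightarrow> int \<Rightarrow> nat list" where
  "Pdelta R Rt As D x =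
    (let S = tupSet R Rt (length As) D in
     if (\<exists>w\<in>S. dotA R As w < x)
     then (THE z. z \<in> S \<and> dotA R As z < x \<and>
                 (\<forall>w\<in>S. dotA R As w < x \<longrightarrow> dotA R As w \<le> dotA R As z))
     else (THE z. z \<in> S \<and> (\<forall>w\<in>S. dotA R As z \<le> dotA R As w)))"

definition P1delta :: "nat set \<Rightarrow> nat set \<Rightarrow> int list list \<Rightarrow> nat \<Rightarrow> int \<Rightarrow> nat" where
  "P1delta R Rt As D x = hd (Pdelta R Rt As D x)"

end

theory Submission
  imports Defs
begin


abbreviation sg :: "nat set \<Rightarrow> nat \<Rightarrow> nat \<Rightarrow> nat" where
  "sg R k \<equiv> succR R ^^ k"

lemma succ_ex: "infinite (R::nat set) \<Longrightarrow> \<exists>y. y \<in> R \<and> x < y"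
proof -
  assume "infinite R"
  then obtain n where "n > x" "n \<in> R" unfolding infinite_nat_iff_unbounded by auto
  then show ?thesis by auto
qed

lemma succ_in: "infinite R \<Longrightarrow> succR R x \<in> R \<and> x < succR R x"
proof -
  assume "infinite R"
  then obtain y where "y \<in> R \<and> x < y" using succ_ex by blast
  then have "(LEAST y. y \<in> R \<and> x < y) \<in> R \<and> x < (LEAST y. y \<in> R \<and> x < y)"
    by (rule LeastI)
  then show ?thesis unfolding succR_def .
qed

lemma succ_least: "y \<in> R \<Longrightarrow> x < y \<Longrightarrow> succR R x \<le> y"
  unfolding succR_def by (simp add: Least_le)

lemma succ_mono: "infinite R \<Longrightarrow> x \<le> y \<Longrightarrow> succR R x \<le> succR R y"
  by (meson le_less_trans succ_in succ_least)

lemma sg_mono: "infinite R \<Longrightarrow> x \<le> y \<Longrightarrow> sg R k x \<le> sg R k y"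
  by (induct k) (auto simp: succ_mono)

lemma sg_in: "infinite R \<Longrightarrow> x \<in> R \<Longrightarrow> sg R k x \<in> R"
  by (induct k) (auto simp: succ_in)

lemma sg_ge: "infinite R \<Longrightarrow> x + k \<le> sg R k x"
proof (induct k)
  case (Suc k) then show ?case using succ_in[of R "sg R k x"] by simp
qed simp

lemma sg_le_exp: "infinite R \<Longrightarrow> a \<le> b \<Longrightarrow> sg R a x \<le> sg R b x"
proof -
  assume R: "infinite R" and ab: "a \<le> b"
  then obtain c where b: "b = c + a" by (metis add.commute le_add_diff_inverse)
  have "sg R b x = sg R c (sg R a x)" by (simp add: b funpow_add)
  then show ?thesis using sg_ge[OF R, of "sg R a x" c] by simp
qed

lemma sg_lt_exp: "infinite R \<Longrightarrow> a < b \<Longrightarrow> sg R a x < sg R b x"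
proof -
  assume R: "infinite R" and ab: "a < b"
  have "sg R a x < sg R (Suc a) x" using succ_in[OF R] by simp
  also have "\<dots> \<le> sg R b x" using sg_le_exp[OF R, of "Suc a" b x] ab by simp
  finally show ?thesis .
qed

lemma succ_le_of_less: "infinite R \<Longrightarrow> v \<in> R \<Longrightarrow> u < v \<Longrightarrow> succR R u \<le> v"
  by (simp add: succ_least)

lemma succ_cancel: "infinite R \<Longrightarrow> x \<in> R \<Longrightarrow> y \<in> R \<Longrightarrow> succR R x \<le> succR R y \<Longrightarrow> x \<le> y"
proof (rule ccontr)
  assume R: "infinite R" and x: "x \<in> R" and le: "succR R x \<le> succR R y" and n: "\<not> x \<le> y"
  then have "succR R y \<le> x" using succ_least[of x R y] by simp
  then show False using succ_in[OF R, of x] le by simp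
qed

lemma R_steps: "infinite R \<Longrightarrow> u \<in> R \<Longrightarrow> v \<in> R \<Longrightarrow> u \<le> v \<Longrightarrow> \<exists>k. v = sg R k u"
proof (induct "v - u" arbitrary: u rule: less_induct)
  case less
  show ?case
  proof (cases "u = v")
    case True then show ?thesis by (metis funpow_0)
  next
    case False
    then have uv: "u < v" using less by simp
    have s: "succR R u \<in> R" "u < succR R u" "succR R u \<le> v" using succ_in[OF less(2)] succ_least[OF less(4) uv] by auto
    have lt: "v - succR R u < v - u" using s(2) s(3) uv by linarith
    obtain k where "v = sg R k (succR R u)" using less(1)[OF lt less(2) s(1) less(4) s(3)] by blast
    then have "v = sg R (Suc k) u" by (simp add: funpow_Suc_right del: funpow.simps)
    then show ?thesis by blast
  qed
qed

lemma R_steps_le: "infinite R \<Longrightarrow> u \<in> R \<Longrightarrow> v \<in> R \<Longrightarrow> u \<le> v \<Longrightarrow> v \<le> sg R J u \<Longrightarrow> \<exists>k\<le>J. v = sg R k u"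
proof -
  assume R: "infinite R" and a: "u \<in> R" "v \<in> R" "u \<le> v" and b: "v \<le> sg R J u"
  obtain k where k: "v = sg R k u" using R_steps[OF R a] by blast
  have "k \<le> J"
  proof (rule ccontr)
    assume "\<not> k \<le> J"
    then have "sg R J u < sg R k u" using sg_lt_exp[OF R, of J k u] by simp
    then show False using b k by simp
  qed
  then show ?thesis using k by blast
qed

lemma succ_enum: "infinite R \<Longrightarrow> succR R (enumerate R k) = enumerate R (Suc k)"
  by (simp add: succR_def enumerate_Suc'')

lemma sg_enum: "infinite R \<Longrightarrow> sg R j (enumerate R k) = enumerate R (k + j)"
  by (induct j) (auto simp: succ_enum)




definition nth0 :: "int list \<Rightarrow> nat \<Rightarrow> int" where
  "nth0 A i = (if i < length A then A ! i else 0)"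

definition coefsum :: "int list \<Rightarrow> int" where
  "coefsum A = (\<Sum>i<length A. \<bar>A ! i\<bar>)"

lemma coefsum_nonneg: "coefsum A \<ge> 0"
  unfolding coefsum_def by (simp add: sum_nonneg)

lemma opApp_ext:
  assumes "length A \<le> K"
  shows "opApp R A z = (\<Sum>i<K. nth0 A i * int (sg R i z))"
  unfolding opApp_def
proof (rule sum.mono_neutral_cong_left)
  show "finite {..<K}" by simp
  show "{..<length A} \<subseteq> {..<K}" using assms by auto
  show "\<forall>i\<in>{..<K} - {..<length A}. nth0 A i * int (sg R i z) = 0" by (auto simp: nth0_def)
  show "\<And>x. x \<in> {..<length A} \<Longrightarrow> A ! x * int (sg R x z) = nth0 A x * int (sg R x z)"
    by (auto simp: nth0_def)
qed

lemma op_from_fun: "opApp R (map c [0..<K]) z = (\<Sum>i<K. c i * int (sg R i z))"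
  unfolding opApp_def by (intro sum.cong) auto

lemma op_lin: "\<exists>L. \<forall>z. opApp R L z = a * opApp R A z + b * opApp R B z"
proof -
  define K where "K = max (length A) (length B)"
  define L where "L = map (\<lambda>i. a * nth0 A i + b * nth0 B i) [0..<K]"
  have "opApp R L z = a * opApp R A z + b * opApp R B z" for z
  proof -
    have "opApp R L z = (\<Sum>i<K. (a * nth0 A i + b * nth0 B i) * int (sg R i z))"
      unfolding L_def by (rule op_from_fun)
    also have "\<dots> = a * (\<Sum>i<K. nth0 A i * int (sg R i z)) + b * (\<Sum>i<K. nth0 B i * int (sg R i z))"
      by (simp add: sum_distrib_left sum.distrib algebra_simps)
    also have "\<dots> = a * opApp R A z + b * opApp R B z"
      using opApp_ext[of A K R z] opApp_ext[of B K R z] by (simp add: K_def)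
    finally show ?thesis .
  qed
  then show ?thesis by blast
qed

lemma op_shift: "opApp R (0 # A) z = opApp R A (succR R z)"
proof -
  have "opApp R (0 # A) z = (\<Sum>i<Suc (length A). (0 # A) ! i * int (sg R i z))"
    unfolding opApp_def by simp
  also have "\<dots> = (\<Sum>i<length A. A ! i * int (sg R (Suc i) z))"
    by (subst sum.lessThan_Suc_shift) simp
  also have "\<dots> = opApp R A (succR R z)"
    unfolding opApp_def by (simp add: funpow_Suc_right del: funpow.simps)
  finally show ?thesis .
qed

lemma op_neg: "opApp R (map uminus A) z = - opApp R A z"
  unfolding opApp_def by (simp add: sum_negf)

lemma opPos_neg: "opPos R (map uminus A) \<longleftrightarrow> opNeg R A"
  unfolding opPos_def opNeg_def by (simp add: op_neg)

lemma opNeg_neg: "opNeg R (map uminus A) \<longleftrightarrow> opPos R A"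
  unfolding opPos_def opNeg_def by (simp add: op_neg)

lemma opZero_neg: "opZero R (map uminus A) \<longleftrightarrow> opZero R A"
  unfolding opZero_def by (simp add: op_neg)

lemma op_bound:
  assumes R: "infinite R" and m: "length A \<le> m"
  shows "\<bar>opApp R A z\<bar> \<le> coefsum A * int (sg R m z)"
proof -
  have "\<bar>opApp R A z\<bar> \<le> (\<Sum>i<length A. \<bar>A ! i * int (sg R i z)\<bar>)"
    unfolding opApp_def by (rule sum_abs)
  also have "\<dots> \<le> (\<Sum>i<length A. \<bar>A ! i\<bar> * int (sg R m z))"
  proof (rule sum_mono)
    fix i assume "i \<in> {..<length A}"
    then have "sg R i z \<le> sg R m z" using sg_le_exp[OF R, of i m z] m by simp
    then show "\<bar>A ! i * int (sg R i z)\<bar> \<le> \<bar>A ! i\<bar> * int (sg R m z)"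
      by (simp add: abs_mult mult_left_mono)
  qed
  also have "\<dots> = coefsum A * int (sg R m z)"
    unfolding coefsum_def by (simp add: sum_distrib_right)
  finally show ?thesis .
qed

lemma finite_bound: "finite (F::nat set) \<Longrightarrow> \<exists>T. \<forall>z\<in>F. z < T"
  using finite_nat_bounded by blast

lemma pos_cofinite: "opPos R A \<Longrightarrow> \<exists>T. \<forall>z\<in>R. T \<le> z \<longrightarrow> opApp R A z > 0"
proof -
  assume "opPos R A"
  then have "finite {z\<in>R. \<not> opApp R A z > 0}" unfolding opPos_def .
  then obtain T where T: "\<forall>z\<in>{z\<in>R. \<not> opApp R A z > 0}. z < T" using finite_bound by blast
  show ?thesis
  proof (intro exI ballI impI)
    fix z assume "z \<in> R" "T \<le> z"
    then show "opApp R A z > 0" using T by force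
  qed
qed

lemma neg_cofinite: "opNeg R A \<Longrightarrow> \<exists>T. \<forall>z\<in>R. T \<le> z \<longrightarrow> opApp R A z < 0"
  using pos_cofinite[of R "map uminus A"] by (simp add: opPos_neg op_neg)

lemma pos_neg_excl: "infinite R \<Longrightarrow> opPos R A \<Longrightarrow> opNeg R A \<Longrightarrow> False"
proof -
  assume R: "infinite R" and p: "opPos R A" and n: "opNeg R A"
  obtain T1 where T1: "\<forall>z\<in>R. T1 \<le> z \<longrightarrow> opApp R A z > 0" using pos_cofinite[OF p] by blast
  obtain T2 where T2: "\<forall>z\<in>R. T2 \<le> z \<longrightarrow> opApp R A z < 0" using neg_cofinite[OF n] by blast
  obtain z where "z \<in> R" "z \<ge> max T1 T2" using R unfolding infinite_nat_iff_unbounded_le by blast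
  then show False using T1 T2 by force
qed

lemma R_above: "infinite (R::nat set) \<Longrightarrow> \<exists>z\<in>R. T \<le> z"
  unfolding infinite_nat_iff_unbounded_le by blast

lemma sparse_S2: "sparse R \<Longrightarrow> opPos R A \<Longrightarrow> \<exists>D. \<forall>z\<in>R. opApp R A (sg R D z) > int z"
  unfolding sparse_def by blast

lemma sparse_S1: "sparse R \<Longrightarrow> opZero R A \<or> opPos R A \<or> opNeg R A"
  unfolding sparse_def by blast

lemma pos_diff:
  assumes R: "infinite R" and sp: "sparse R" and B: "opPos R B"
    and L: "\<forall>z. opApp R L z = opApp R B (succR R z) - opApp R B z"
  shows "opPos R L"
proof (rule ccontr)
  assume np: "\<not> opPos R L"
  have "\<exists>T. \<forall>z\<in>R. T \<le> z \<longrightarrow> opApp R L z \<le> 0"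
  proof -
    have "opZero R L \<or> opNeg R L" using sparse_S1[OF sp, of L] np by blast
    then show ?thesis
    proof
      assume "opZero R L" then show ?thesis unfolding opZero_def by auto
    next
      assume "opNeg R L" then show ?thesis using neg_cofinite[of R L] by force
    qed
  qed
  then obtain T where T: "\<forall>z\<in>R. T \<le> z \<longrightarrow> opApp R L z \<le> 0" by blast
  obtain z0 where z0: "z0 \<in> R" "T \<le> z0" using R_above[OF R] by blast
  have dec: "opApp R B (sg R k z0) \<le> opApp R B z0" for k
  proof (induct k)
    case (Suc k)
    have "sg R k z0 \<in> R" "T \<le> sg R k z0" using sg_in[OF R z0(1)] sg_ge[OF R, of z0 k] z0(2) by auto
    then have "opApp R L (sg R k z0) \<le> 0" using T by blast
    then show ?case using Suc L by simp
  qed simp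
  obtain E where E: "\<forall>z\<in>R. opApp R B (sg R E z) > int z" using sparse_S2[OF sp B] by blast
  define k where "k = nat (opApp R B z0) + 1"
  have "opApp R B (sg R E (sg R k z0)) > int (sg R k z0)" using E sg_in[OF R z0(1)] by blast
  moreover have "sg R E (sg R k z0) = sg R (E + k) z0" by (simp add: funpow_add)
  moreover have "int (sg R k z0) \<ge> int k" using sg_ge[OF R, of z0 k] by simp
  ultimately have "opApp R B (sg R (E + k) z0) > int k" by simp
  moreover have "int k > opApp R B z0" unfolding k_def by simp
  ultimately show False using dec[of "E + k"] by simp
qed

lemma diff_op_ex: "\<exists>L. \<forall>z. opApp R L z = opApp R B (succR R z) - opApp R B z"
proof -
  obtain L where "\<forall>z. opApp R L z = 1 * opApp R (0 # B) z + (-1) * opApp R B z"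
    using op_lin by blast
  then show ?thesis by (auto simp: op_shift)
qed

lemma pos_mono:
  assumes R: "infinite R" and sp: "sparse R" and B: "opPos R B"
  shows "\<exists>T. \<forall>x\<in>R. \<forall>y\<in>R. T \<le> x \<longrightarrow> x < y \<longrightarrow> opApp R B x < opApp R B y"
proof -
  obtain L where L: "\<forall>z. opApp R L z = opApp R B (succR R z) - opApp R B z" using diff_op_ex by blast
  have "opPos R L" using pos_diff[OF R sp B L] .
  then obtain T where T: "\<forall>z\<in>R. T \<le> z \<longrightarrow> opApp R L z > 0" using pos_cofinite by blast
  have inc: "opApp R B x < opApp R B (sg R (Suc k) x)" if x: "x \<in> R" "T \<le> x" for x k
  proof (induct k)
    case 0 then show ?case using T L x by auto
  next
    case (Suc k)
    have "sg R (Suc k) x \<in> R" "T \<le> sg R (Suc k) x" using sg_in[OF R x(1), of "Suc k"] sg_ge[OF R, of x "Suc k"] x(2) by (simp_all del: funpow.simps)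
    then have "opApp R L (sg R (Suc k) x) > 0" using T by blast
    then show ?case using Suc L by simp
  qed
  show ?thesis
  proof (intro exI ballI impI)
    fix x y assume xy: "x \<in> R" "y \<in> R" "T \<le> x" "x < y"
    obtain k where k: "y = sg R k x" using R_steps[OF R xy(1) xy(2)] xy(4) by force
    then obtain k' where "k = Suc k'" using xy(4) by (cases k) auto
    then show "opApp R B x < opApp R B y" using inc[OF xy(1) xy(3)] k by simp
  qed
qed

lemma growth:
  assumes R: "infinite R" and sp: "sparse R"
  shows "\<exists>P. \<forall>z\<in>R. 2 * z \<le> sg R P z"
proof -
  have op: "opApp R [-1, 1] z = int (succR R z) - int z" for z
    unfolding opApp_def by (simp add: numeral_2_eq_2)
  have "opPos R [-1, 1]" unfolding opPos_def using succ_in[OF R] by (simp add: op)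
  then obtain E where E: "\<forall>z\<in>R. opApp R [-1,1] (sg R E z) > int z" using sparse_S2[OF sp] by blast
  have "2 * z \<le> sg R (Suc E) z" if z: "z \<in> R" for z
  proof -
    have "int (succR R (sg R E z)) - int (sg R E z) > int z" using E z op by simp
    moreover have "z \<le> sg R E z" using sg_ge[OF R, of z E] by simp
    ultimately show ?thesis by simp
  qed
  then show ?thesis by blast
qed

lemma growth_k:
  assumes R: "infinite R" and P: "\<forall>z\<in>R. 2 * z \<le> sg R P z" and z: "z \<in> R"
  shows "2 ^ k * z \<le> sg R (k * P) z"
proof (induct k)
  case (Suc k)
  have "sg R (Suc k * P) z = sg R P (sg R (k * P) z)" by (simp add: funpow_add)
  moreover have "2 * sg R (k * P) z \<le> sg R P (sg R (k * P) z)" using P sg_in[OF R z] by blast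
  ultimately show ?case using Suc by simp
qed simp

lemma dom:
  assumes R: "infinite R" and sp: "sparse R" and B: "opPos R B"
  shows "\<exists>E. \<forall>E'\<ge>E. \<forall>v\<in>R. opApp R B (sg R E' v) > int C * int (sg R m v)"
proof -
  obtain EB where EB: "\<forall>z\<in>R. opApp R B (sg R EB z) > int z" using sparse_S2[OF sp B] by blast
  obtain P where P: "\<forall>z\<in>R. 2 * z \<le> sg R P z" using growth[OF R sp] by blast
  define E where "E = EB + (C * P + m)"
  have main: "opApp R B (sg R E v) > int C * int (sg R m v)" if v: "v \<in> R" for v
  proof -
    have vm: "sg R m v \<in> R" using sg_in[OF R v] .
    have "2 ^ C * sg R m v \<le> sg R (C * P) (sg R m v)" using growth_k[OF R P vm] .
    moreover have "C \<le> 2 ^ C" using less_exp[of C] by linarith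
    ultimately have "C * sg R m v \<le> sg R (C * P) (sg R m v)"
      by (meson le_trans mult_le_mono1)
    moreover have "sg R (C * P) (sg R m v) = sg R (C * P + m) v" by (simp add: funpow_add)
    ultimately have a: "C * sg R m v \<le> sg R (C * P + m) v" by simp
    have "opApp R B (sg R EB (sg R (C * P + m) v)) > int (sg R (C * P + m) v)"
      using EB sg_in[OF R v] by blast
    moreover have "sg R EB (sg R (C * P + m) v) = sg R E v" by (simp add: E_def funpow_add)
    ultimately show ?thesis using a by (metis of_nat_le_iff of_nat_mult order_le_less_trans)
  qed
  show ?thesis
  proof (intro exI allI impI ballI)
    fix E' v assume E': "E \<le> E'" and v: "v \<in> R"
    obtain e where e: "E' = E + e" using E' le_Suc_ex by blast
    have ve: "sg R e v \<in> R" "v \<le> sg R e v" using sg_in[OF R v] sg_ge[OF R, of v e] by auto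
    have "sg R E' v = sg R E (sg R e v)" by (simp add: e funpow_add)
    then have "opApp R B (sg R E' v) > int C * int (sg R m (sg R e v))" using main[OF ve(1)] by simp
    moreover have "sg R m v \<le> sg R m (sg R e v)" using sg_mono[OF R ve(2)] .
    ultimately show "opApp R B (sg R E' v) > int C * int (sg R m v)"
      by (meson mult_left_mono of_nat_0_le_iff of_nat_le_iff order_le_less_trans)
  qed
qed




lemma pos_mono_le:
  assumes "\<forall>x\<in>R. \<forall>y\<in>R. T \<le> x \<longrightarrow> x < y \<longrightarrow> (f::nat\<Rightarrow>int) x < f y"
    and "x \<in> R" "y \<in> R" "T \<le> x" "x \<le> y"
  shows "f x \<le> f y"
  using assms by (cases "x = y") (auto intro: less_imp_le)

lemma key:
  assumes R: "infinite R" and sp: "sparse R" and B: "opPos R B"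
  shows "\<exists>D0. \<forall>D\<ge>D0. \<forall>z\<in>R. \<forall>w\<in>R. D0 \<le> z \<longrightarrow> z < w \<longrightarrow>
     opApp R B z < opApp R B w \<and>
     (\<forall>v\<in>R. sg R D v \<le> w \<longrightarrow> opApp R B w - opApp R B z > 2 * int C * int (sg R m v))"
proof -
  obtain T where T: "\<forall>x\<in>R. \<forall>y\<in>R. T \<le> x \<longrightarrow> x < y \<longrightarrow> opApp R B x < opApp R B y"
    using pos_mono[OF R sp B] by blast
  obtain L where L: "\<forall>z. opApp R L z = opApp R B (succR R z) - opApp R B z" using diff_op_ex by blast
  have Lp: "opPos R L" using pos_diff[OF R sp B L] .
  obtain Th where Th: "\<forall>x\<in>R. \<forall>y\<in>R. Th \<le> x \<longrightarrow> x < y \<longrightarrow> opApp R L x < opApp R L y"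
    using pos_mono[OF R sp Lp] by blast
  obtain E where E: "\<forall>E'\<ge>E. \<forall>v\<in>R. opApp R L (sg R E' v) > int (2 * C) * int (sg R m v)"
    using dom[OF R sp Lp] by blast
  define E' where "E' = max E Th"
  define D0 where "D0 = max T (Suc E')"
  show ?thesis
  proof (intro exI allI impI ballI conjI)
    fix D z w assume D: "D0 \<le> D" and z: "z \<in> R" and w: "w \<in> R" and zD: "D0 \<le> z" and zw: "z < w"
    show "opApp R B z < opApp R B w" using T z w zD zw D0_def by auto
    fix v assume v: "v \<in> R" and vw: "sg R D v \<le> w"
    obtain k where k: "w = sg R k z" using R_steps[OF R z w] zw by force
    then obtain k' where k': "k = Suc k'" using zw by (cases k) auto
    define u where "u = sg R k' z"
    have u: "u \<in> R" "z \<le> u" "w = succR R u" using sg_in[OF R z] sg_ge[OF R, of z k'] k k' u_def by auto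
    have Bzu: "opApp R B z \<le> opApp R B u" using pos_mono_le[OF T z u(1)] zD u(2) D0_def by auto
    obtain D' where D': "D = Suc D'" using D D0_def by (cases D) auto
    have "succR R (sg R D' v) \<le> succR R u" using vw u(3) D' by simp
    then have vu: "sg R D' v \<le> u" using succ_cancel[OF R sg_in[OF R v] u(1)] by blast
    have "sg R E' v \<le> sg R D' v" using sg_le_exp[OF R] D D' D0_def by simp
    moreover have "Th \<le> sg R E' v" using sg_ge[OF R, of v E'] E'_def by simp
    moreover have "Th \<le> sg R D' v" using calculation by simp
    ultimately have a1: "opApp R L (sg R E' v) \<le> opApp R L (sg R D' v)"
      using pos_mono_le[OF Th sg_in[OF R v] sg_in[OF R v]] by blast
    have a2: "opApp R L (sg R D' v) \<le> opApp R L u"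
      using pos_mono_le[OF Th sg_in[OF R v] u(1)] vu \<open>Th \<le> sg R D' v\<close> by blast
    have "opApp R L (sg R E' v) \<le> opApp R L u" using a1 a2 by simp
    moreover have "opApp R L (sg R E' v) > int (2 * C) * int (sg R m v)" using E E'_def v by simp
    moreover have "opApp R L u = opApp R B w - opApp R B u" using L u(3) by simp
    ultimately show "opApp R B w - opApp R B z > 2 * int C * int (sg R m v)" using Bzu by simp
  qed
qed

lemma tup_len: "z \<in> tupSet R Rt n D \<Longrightarrow> length z = n"
  unfolding tupSet_def by simp

lemma tup_in: "Rt \<subseteq> R \<Longrightarrow> z \<in> tupSet R Rt n D \<Longrightarrow> i < n \<Longrightarrow> z ! i \<in> R"
  unfolding tupSet_def by auto

lemma tup_inRt: "z \<in> tupSet R Rt n D \<Longrightarrow> i < n \<Longrightarrow> z ! i \<in> Rt"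
  unfolding tupSet_def by auto

lemma tup_step: "z \<in> tupSet R Rt n D \<Longrightarrow> Suc i < n \<Longrightarrow> sg R D (z ! Suc i) \<le> z ! i"
proof -
  assume z: "z \<in> tupSet R Rt n D" and i: "Suc i < n"
  have "\<forall>j<n. sg R D (if Suc j < n then z ! Suc j else Min Rt) \<le> z ! j" using z unfolding tupSet_def by blast
  then have "sg R D (if Suc i < n then z ! Suc i else Min Rt) \<le> z ! i" using Suc_lessD[OF i] by blast
  then show ?thesis using i by simp
qed

lemma tup_ge: "infinite R \<Longrightarrow> z \<in> tupSet R Rt n D \<Longrightarrow> i < n \<Longrightarrow> D \<le> z ! i"
proof -
  assume R: "infinite R" and z: "z \<in> tupSet R Rt n D" and i: "i < n"
  define y where "y = (if Suc i < n then z ! Suc i else Min Rt)"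
  have "sg R D y \<le> z ! i" using z i unfolding tupSet_def y_def by blast
  moreover have "D \<le> sg R D y" using sg_ge[OF R, of y D] by simp
  ultimately show ?thesis by simp
qed

lemma tup_chain:
  assumes R: "infinite R" and z: "z \<in> tupSet R Rt n D"
  shows "i \<le> k \<Longrightarrow> k < n \<Longrightarrow> z ! k \<le> z ! i"
proof (induct k)
  case 0 then show ?case by simp
next
  case (Suc k)
  show ?case
  proof (cases "i = Suc k")
    case False
    then have "z ! k \<le> z ! i" using Suc by simp
    moreover have "z ! Suc k \<le> sg R D (z ! Suc k)" using sg_ge[OF R, of "z ! Suc k" D] by simp
    moreover have "sg R D (z ! Suc k) \<le> z ! k" using tup_step[OF z Suc(3)] .
    ultimately show ?thesis by simp
  qed simp
qed

definition Cs :: "int list list \<Rightarrow> int" where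
  "Cs As = (\<Sum>k<length As. coefsum (As ! k))"

definition ms :: "int list list \<Rightarrow> nat" where
  "ms As = sum_list (map length As)"

lemma Cs_nonneg: "Cs As \<ge> 0"
  unfolding Cs_def by (simp add: sum_nonneg coefsum_nonneg)

lemma len_le_ms: "k < length As \<Longrightarrow> length (As ! k) \<le> ms As"
  unfolding ms_def by (rule member_le_sum_list) auto

lemma tail_bound:
  assumes R: "infinite R" and Rt: "Rt \<subseteq> R" and z: "z \<in> tupSet R Rt n D"
    and n: "length As = n" and j: "Suc j < n"
  shows "\<bar>\<Sum>k\<in>{Suc j..<n}. opApp R (As ! k) (z ! k)\<bar> \<le> Cs As * int (sg R (ms As) (z ! Suc j))"
proof -
  have "\<bar>\<Sum>k\<in>{Suc j..<n}. opApp R (As ! k) (z ! k)\<bar> \<le> (\<Sum>k\<in>{Suc j..<n}. \<bar>opApp R (As ! k) (z ! k)\<bar>)"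
    by (rule sum_abs)
  also have "\<dots> \<le> (\<Sum>k\<in>{Suc j..<n}. coefsum (As ! k) * int (sg R (ms As) (z ! Suc j)))"
  proof (rule sum_mono)
    fix k assume k: "k \<in> {Suc j..<n}"
    have "\<bar>opApp R (As ! k) (z ! k)\<bar> \<le> coefsum (As ! k) * int (sg R (ms As) (z ! k))"
      using op_bound[OF R len_le_ms] k n by auto
    also have "\<dots> \<le> coefsum (As ! k) * int (sg R (ms As) (z ! Suc j))"
      using tup_chain[OF R z, of "Suc j" k] k sg_mono[OF R] coefsum_nonneg
      by (simp add: mult_left_mono)
    finally show "\<bar>opApp R (As ! k) (z ! k)\<bar> \<le> coefsum (As ! k) * int (sg R (ms As) (z ! Suc j))" .
  qed
  also have "\<dots> = (\<Sum>k\<in>{Suc j..<n}. coefsum (As ! k)) * int (sg R (ms As) (z ! Suc j))"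
    by (simp add: sum_distrib_right)
  also have "\<dots> \<le> Cs As * int (sg R (ms As) (z ! Suc j))"
  proof (rule mult_right_mono)
    show "(\<Sum>k\<in>{Suc j..<n}. coefsum (As ! k)) \<le> Cs As"
      unfolding Cs_def n by (rule sum_mono2) (auto simp: coefsum_nonneg)
  qed simp
  finally show ?thesis .
qed

lemma sum_split3:
  assumes "i < n"
  shows "(\<Sum>k<n. g k) = (\<Sum>k<i. g k) + g i + (\<Sum>k\<in>{Suc i..<n}. (g k :: int))"
proof -
  have "{..<n} = {..<Suc i} \<union> {Suc i..<n}" using assms by auto
  then have "(\<Sum>k<n. g k) = (\<Sum>k<Suc i. g k) + (\<Sum>k\<in>{Suc i..<n}. g k)"
    by (metis sum.union_disjoint finite_lessThan finite_atLeastLessThan ivl_disj_int_one(2) lessThan_atLeast0)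
  then show ?thesis by simp
qed

definition Bop :: "nat set \<Rightarrow> int list \<Rightarrow> int list" where
  "Bop R A = (if opPos R A then A else map uminus A)"

definition sgnop :: "nat set \<Rightarrow> int list \<Rightarrow> int" where
  "sgnop R A = (if opPos R A then 1 else -1)"

lemma Bop_app: "opApp R (Bop R A) x = sgnop R A * opApp R A x"
  unfolding Bop_def sgnop_def by (simp add: op_neg)

lemma Bop_pos: "sparse R \<Longrightarrow> \<not> opZero R A \<Longrightarrow> opPos R (Bop R A)"
  unfolding Bop_def using sparse_S1[of R A] by (auto simp: opPos_neg)

lemma sgnop_abs: "\<bar>sgnop R A * x\<bar> = \<bar>x\<bar>"
  unfolding sgnop_def by simp

lemma lex:
  assumes R: "infinite R" and Rt: "Rt \<subseteq> R" and n: "length As = n"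
    and keyA: "\<forall>i<n. \<forall>z\<in>R. \<forall>w\<in>R. D0 \<le> z \<longrightarrow> z < w \<longrightarrow>
       opApp R (Bop R (As!i)) z < opApp R (Bop R (As!i)) w \<and>
       (\<forall>v\<in>R. sg R D v \<le> w \<longrightarrow> opApp R (Bop R (As!i)) w - opApp R (Bop R (As!i)) z > 2 * Cs As * int (sg R (ms As) v))"
    and D: "D0 \<le> D" and z: "z \<in> tupSet R Rt n D" and w: "w \<in> tupSet R Rt n D"
    and i: "i < n" and pre: "\<forall>k<i. z ! k = w ! k" and lt: "z ! i < w ! i"
  shows "sgnop R (As ! i) * (dotA R As w - dotA R As z) > 0"
proof -
  define g where "g k = opApp R (As ! k) (w ! k) - opApp R (As ! k) (z ! k)" for k
  define tw where "tw = (\<Sum>k\<in>{Suc i..<n}. opApp R (As ! k) (w ! k))"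
  define tz where "tz = (\<Sum>k\<in>{Suc i..<n}. opApp R (As ! k) (z ! k))"
  have "dotA R As w - dotA R As z = (\<Sum>k<n. g k)"
    unfolding dotA_def g_def n by (simp add: sum_subtractf)
  also have "\<dots> = (\<Sum>k<i. g k) + g i + (\<Sum>k\<in>{Suc i..<n}. g k)" by (rule sum_split3[OF i])
  also have "(\<Sum>k<i. g k) = 0" using pre by (simp add: g_def)
  also have "(\<Sum>k\<in>{Suc i..<n}. g k) = tw - tz" unfolding g_def tw_def tz_def by (simp add: sum_subtractf)
  finally have eq: "dotA R As w - dotA R As z = g i + (tw - tz)" by simp
  define bd where "bd = opApp R (Bop R (As!i)) (w!i) - opApp R (Bop R (As!i)) (z!i)"
  have bdg: "sgnop R (As ! i) * g i = bd" unfolding bd_def g_def by (simp add: Bop_app algebra_simps)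
  have zi: "z ! i \<in> R" "w ! i \<in> R" "D0 \<le> z ! i" using tup_in[OF Rt z i] tup_in[OF Rt w i] tup_ge[OF R z i] D by auto
  have sgn: "sgnop R (As ! i) * (tw - tz) \<ge> - \<bar>tw\<bar> - \<bar>tz\<bar>"
  proof (cases "opPos R (As ! i)")
    case True then show ?thesis unfolding sgnop_def by simp
  next
    case False then show ?thesis unfolding sgnop_def by simp
  qed
  show ?thesis
  proof (cases "Suc i < n")
    case True
    define v where "v = max (z ! Suc i) (w ! Suc i)"
    have vR: "v \<in> R" using tup_in[OF Rt z True] tup_in[OF Rt w True] v_def by (simp add: max_def)
    have "sg R D (z ! Suc i) \<le> w ! i" using tup_step[OF z True] lt by simp
    moreover have "sg R D (w ! Suc i) \<le> w ! i" using tup_step[OF w True] .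
    ultimately have vw: "sg R D v \<le> w ! i" unfolding v_def by (simp add: max_def)
    have kk: "opApp R (Bop R (As!i)) (z!i) < opApp R (Bop R (As!i)) (w!i) \<and>
       (\<forall>v\<in>R. sg R D v \<le> w!i \<longrightarrow> opApp R (Bop R (As!i)) (w!i) - opApp R (Bop R (As!i)) (z!i) > 2 * Cs As * int (sg R (ms As) v))"
      using keyA i zi lt by blast
    have bdv: "bd > 2 * Cs As * int (sg R (ms As) v)" using conjunct2[OF kk] vR vw unfolding bd_def by blast
    have "\<bar>tw\<bar> \<le> Cs As * int (sg R (ms As) (w ! Suc i))" using tail_bound[OF R Rt w n True] tw_def by simp
    also have "\<dots> \<le> Cs As * int (sg R (ms As) v)"
      using sg_mono[OF R, of "w ! Suc i" v] Cs_nonneg v_def by (simp add: mult_left_mono)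
    finally have a: "\<bar>tw\<bar> \<le> Cs As * int (sg R (ms As) v)" .
    have "\<bar>tz\<bar> \<le> Cs As * int (sg R (ms As) (z ! Suc i))" using tail_bound[OF R Rt z n True] tz_def by simp
    also have "\<dots> \<le> Cs As * int (sg R (ms As) v)"
      using sg_mono[OF R, of "z ! Suc i" v] Cs_nonneg v_def by (simp add: mult_left_mono)
    finally have b: "\<bar>tz\<bar> \<le> Cs As * int (sg R (ms As) v)" .
    have "sgnop R (As ! i) * (dotA R As w - dotA R As z) = sgnop R (As ! i) * (g i + (tw - tz))"
      using eq by simp
    also have "\<dots> = sgnop R (As ! i) * g i + sgnop R (As ! i) * (tw - tz)" by (rule distrib_left)
    finally have "sgnop R (As ! i) * (dotA R As w - dotA R As z) = bd + sgnop R (As ! i) * (tw - tz)"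
      using bdg by simp
    then show ?thesis using a b bdv sgn by linarith
  next
    case False
    then have "tw = 0" "tz = 0" unfolding tw_def tz_def by auto
    moreover have "bd > 0"
    proof -
      have "opApp R (Bop R (As!i)) (z!i) < opApp R (Bop R (As!i)) (w!i)" using keyA i zi lt by blast
      then show ?thesis unfolding bd_def by simp
    qed
    ultimately show ?thesis using eq bdg by (simp add: algebra_simps)
  qed
qed




lemma finite_choice_max:
  assumes "\<forall>i<(n::nat). \<exists>d::nat. P i d"
  shows "\<exists>f. \<forall>i<n. P i (f i) \<and> f i \<le> Max (f ` {..<n})"
proof -
  from assms obtain f where "\<forall>i<n. P i (f i)" by metis
  then show ?thesis by (intro exI[of _ f]) auto
qed

lemma struct:
  assumes R: "infinite R" and sp: "sparse R" and Rt: "Rt \<subseteq> R" and n: "length As = n"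
    and nz: "\<forall>i<n. \<not> opZero R (As ! i)" and pos: "opPos R (As ! 0)" and n1: "n \<ge> 1"
  shows "\<exists>D0. \<forall>D\<ge>D0.
     (\<forall>z\<in>tupSet R Rt n D. \<forall>w\<in>tupSet R Rt n D. z \<noteq> w \<longrightarrow> dotA R As z \<noteq> dotA R As w) \<and>
     (\<forall>z\<in>tupSet R Rt n D. \<forall>w\<in>tupSet R Rt n D. z ! 0 < w ! 0 \<longrightarrow> dotA R As z < dotA R As w) \<and>
     (\<forall>z\<in>tupSet R Rt n D. opApp R (As!0) (z!0) < 2 * dotA R As z \<and> 2 * dotA R As z < 3 * opApp R (As!0) (z!0))"
proof -
  define P where "P i D0 \<longleftrightarrow> (\<forall>D\<ge>D0. \<forall>z\<in>R. \<forall>w\<in>R. D0 \<le> z \<longrightarrow> z < w \<longrightarrow>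
     opApp R (Bop R (As!i)) z < opApp R (Bop R (As!i)) w \<and>
     (\<forall>v\<in>R. sg R D v \<le> w \<longrightarrow> opApp R (Bop R (As!i)) w - opApp R (Bop R (As!i)) z > 2 * int (nat (Cs As)) * int (sg R (ms As) v)))" for i D0
  have "\<forall>i<n. \<exists>d. P i d"
  proof (intro allI impI)
    fix i assume "i < n"
    then have "opPos R (Bop R (As ! i))" using Bop_pos[OF sp] nz by blast
    from key[OF R sp this, of "nat (Cs As)" "ms As"] show "\<exists>d. P i d" unfolding P_def by blast
  qed
  then obtain f where f: "\<forall>i<n. P i (f i) \<and> f i \<le> Max (f ` {..<n})" using finite_choice_max by blast
  define K where "K = Max (f ` {..<n})"
  have CsI: "int (nat (Cs As)) = Cs As" using Cs_nonneg by simp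
  obtain T0 where T0: "\<forall>z\<in>R. T0 \<le> z \<longrightarrow> opApp R (As!0) z > 0" using pos_cofinite[OF pos] by blast
  obtain Tm where Tm: "\<forall>x\<in>R. \<forall>y\<in>R. Tm \<le> x \<longrightarrow> x < y \<longrightarrow> opApp R (As!0) x < opApp R (As!0) y"
    using pos_mono[OF R sp pos] by blast
  obtain E where E: "\<forall>E'\<ge>E. \<forall>v\<in>R. opApp R (As!0) (sg R E' v) > int (2 * nat (Cs As)) * int (sg R (ms As) v)"
    using dom[OF R sp pos] by blast
  define E0 where "E0 = max E (max T0 Tm)"
  define D0 where "D0 = max K (max E0 (max T0 Tm))"
  show ?thesis
  proof (intro exI allI impI)
    fix D assume D: "D0 \<le> D"
    let ?S = "tupSet R Rt n D"
    have keyA: "\<forall>i<n. \<forall>z\<in>R. \<forall>w\<in>R. K \<le> z \<longrightarrow> z < w \<longrightarrow>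
       opApp R (Bop R (As!i)) z < opApp R (Bop R (As!i)) w \<and>
       (\<forall>v\<in>R. sg R D v \<le> w \<longrightarrow> opApp R (Bop R (As!i)) w - opApp R (Bop R (As!i)) z > 2 * Cs As * int (sg R (ms As) v))"
    proof (intro allI impI ballI)
      fix i z w assume i: "i < n" and z: "z \<in> R" and w: "w \<in> R" and Kz: "K \<le> z" and zw: "z < w"
      have Pi: "P i (f i)" and fi: "f i \<le> K" using f i K_def by auto
      have "D \<ge> f i" using D fi D0_def by simp
      moreover have "f i \<le> z" using Kz fi by simp
      ultimately show "opApp R (Bop R (As!i)) z < opApp R (Bop R (As!i)) w \<and>
       (\<forall>v\<in>R. sg R D v \<le> w \<longrightarrow> opApp R (Bop R (As!i)) w - opApp R (Bop R (As!i)) z > 2 * Cs As * int (sg R (ms As) v))"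
        using Pi z w zw unfolding P_def CsI by blast
    qed
    have KD: "K \<le> D" using D D0_def by simp
    have lexS: "sgnop R (As ! i) * (dotA R As w - dotA R As z) > 0"
      if "z \<in> ?S" "w \<in> ?S" "i < n" "\<forall>k<i. z ! k = w ! k" "z ! i < w ! i" for z w i
      using lex[OF R Rt n keyA KD that] .
    have n0: "0 < n" using n1 by simp
    show "(\<forall>z\<in>?S. \<forall>w\<in>?S. z \<noteq> w \<longrightarrow> dotA R As z \<noteq> dotA R As w) \<and>
     (\<forall>z\<in>?S. \<forall>w\<in>?S. z ! 0 < w ! 0 \<longrightarrow> dotA R As z < dotA R As w) \<and>
     (\<forall>z\<in>?S. opApp R (As!0) (z!0) < 2 * dotA R As z \<and> 2 * dotA R As z < 3 * opApp R (As!0) (z!0))"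
    proof (intro conjI ballI impI)
      fix z w assume z: "z \<in> ?S" and w: "w \<in> ?S" and zw: "z \<noteq> w"
      have "\<exists>i<n. z ! i \<noteq> w ! i"
      proof (rule ccontr)
        assume "\<not> (\<exists>i<n. z ! i \<noteq> w ! i)"
        then have "z = w" using tup_len[OF z] tup_len[OF w] by (auto intro: nth_equalityI)
        then show False using zw by simp
      qed
      then obtain i0 where i0: "i0 < n \<and> z ! i0 \<noteq> w ! i0" by blast
      define i where "i = (LEAST i. i < n \<and> z ! i \<noteq> w ! i)"
      have i: "i < n" "z ! i \<noteq> w ! i" using LeastI[of "\<lambda>i. i < n \<and> z ! i \<noteq> w ! i", OF i0] i_def by auto
      have pre: "\<forall>k<i. z ! k = w ! k"
      proof (intro allI impI)
        fix k assume "k < i"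
        then have "\<not> (k < n \<and> z ! k \<noteq> w ! k)" using not_less_Least[of k "\<lambda>i. i < n \<and> z ! i \<noteq> w ! i"] i_def by blast
        then show "z ! k = w ! k" using \<open>k < i\<close> i(1) by simp
      qed
      show "dotA R As z \<noteq> dotA R As w"
      proof (cases "z ! i < w ! i")
        case True
        have "sgnop R (As ! i) * (dotA R As w - dotA R As z) > 0" using lexS[OF z w i(1) pre True] .
        then show ?thesis by auto
      next
        case False
        then have "w ! i < z ! i" using i(2) by simp
        moreover have "\<forall>k<i. w ! k = z ! k" using pre by simp
        ultimately have "sgnop R (As ! i) * (dotA R As z - dotA R As w) > 0" using lexS[OF w z i(1)] by blast
        then show ?thesis by auto
      qed
    next
      fix z w assume z: "z \<in> ?S" and w: "w \<in> ?S" and lt: "z ! 0 < w ! 0"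
      have "sgnop R (As ! 0) * (dotA R As w - dotA R As z) > 0" using lexS[OF z w n0] lt by simp
      then show "dotA R As z < dotA R As w" using pos unfolding sgnop_def by simp
    next
      fix z assume z: "z \<in> ?S"
      define a where "a = opApp R (As!0) (z!0)"
      define t where "t = (\<Sum>k\<in>{Suc 0..<n}. opApp R (As ! k) (z ! k))"
      have z0: "z ! 0 \<in> R" "D \<le> z ! 0" using tup_in[OF Rt z n0] tup_ge[OF R z n0] by auto
      have "dotA R As z = (\<Sum>k<0. opApp R (As ! k) (z ! k)) + a + t"
        unfolding dotA_def n a_def t_def by (rule sum_split3[OF n0])
      then have eq: "dotA R As z = a + t" by simp
      have "2 * \<bar>t\<bar> < a"
      proof (cases "Suc 0 < n")
        case True
        have tb: "\<bar>t\<bar> \<le> Cs As * int (sg R (ms As) (z ! 1))" using tail_bound[OF R Rt z n True] t_def by simp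
        have z1: "z ! 1 \<in> R" using tup_in[OF Rt z True] by simp
        have "sg R D (z ! 1) \<le> z ! 0" using tup_step[OF z True] by simp
        moreover have "sg R E0 (z ! 1) \<le> sg R D (z ! 1)" using sg_le_exp[OF R] D D0_def by simp
        moreover have "Tm \<le> sg R E0 (z ! 1)" using sg_ge[OF R, of "z ! 1" E0] E0_def by simp
        ultimately have "opApp R (As!0) (sg R E0 (z ! 1)) \<le> a"
          using pos_mono_le[OF Tm sg_in[OF R z1] z0(1)] unfolding a_def by simp
        moreover have "opApp R (As!0) (sg R E0 (z ! 1)) > int (2 * nat (Cs As)) * int (sg R (ms As) (z ! 1))"
          using E E0_def z1 by simp
        ultimately show ?thesis using tb CsI by simp
      next
        case False
        then have "t = 0" unfolding t_def by simp
        moreover have "a > 0" using T0 z0 D D0_def unfolding a_def by simp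
        ultimately show ?thesis by simp
      qed
      then show "opApp R (As!0) (z!0) < 2 * dotA R As z" "2 * dotA R As z < 3 * opApp R (As!0) (z!0)"
        using eq unfolding a_def[symmetric] by linarith+
    qed
  qed
qed




lemma Rt_sub: "infinite R \<Longrightarrow> sub_d Rt d R \<Longrightarrow> Rt \<subseteq> R"
  unfolding sub_d_def using enumerate_in_set by blast

lemma Rt_step: "infinite R \<Longrightarrow> sub_d Rt d R \<Longrightarrow> r \<in> Rt \<Longrightarrow> sg R (d * k) r \<in> Rt"
proof -
  assume R: "infinite R" and s: "sub_d Rt d R" and r: "r \<in> Rt"
  obtain N where N: "Rt = {enumerate R (N + d * t) | t. True}" using s unfolding sub_d_def by blast
  then obtain t where t: "r = enumerate R (N + d * t)" using r by blast
  have "sg R (d * k) r = enumerate R (N + d * (t + k))" using sg_enum[OF R] t by (simp add: algebra_simps)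
  then show ?thesis using N by blast
qed

lemma Rt_step_dvd: "infinite R \<Longrightarrow> sub_d Rt d R \<Longrightarrow> r \<in> Rt \<Longrightarrow> d dvd D \<Longrightarrow> sg R D r \<in> Rt"
  by (metis Rt_step dvd_def)

lemma Rt_above: "infinite R \<Longrightarrow> sub_d Rt d R \<Longrightarrow> d \<ge> 1 \<Longrightarrow> \<exists>r\<in>Rt. X \<le> r"
proof -
  assume R: "infinite R" and s: "sub_d Rt d R" and d: "d \<ge> 1"
  obtain N where N: "Rt = {enumerate R (N + d * t) | t. True}" using s unfolding sub_d_def by blast
  have "X \<le> N + d * X" using d by (simp add: trans_le_add2)
  also have "\<dots> \<le> enumerate R (N + d * X)" using le_enumerate[OF R] .
  finally show ?thesis using N by blast
qed

lemma tup_nonempty: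
  assumes R: "infinite R" and s: "sub_d Rt d R" and d: "d \<ge> 1" and dD: "d dvd D"
  shows "\<exists>z. z \<in> tupSet R Rt n D"
proof -
  obtain b where b: "b \<in> Rt" "sg R D (Min Rt) \<le> b" using Rt_above[OF R s d] by blast
  define z where "z = map (\<lambda>i. sg R (D * (n - 1 - i)) b) [0..<n]"
  have zi: "z ! i = sg R (D * (n - 1 - i)) b" if "i < n" for i using that z_def by simp
  have inRt: "sg R (D * j) b \<in> Rt" for j
  proof -
    obtain c where "D = d * c" using dD by blast
    then have e: "D * j = d * (c * j)" by simp
    show ?thesis unfolding e by (rule Rt_step[OF R s b(1)])
  qed
  have "z \<in> tupSet R Rt n D"
    unfolding tupSet_def
  proof (intro CollectI conjI allI impI)
    show "length z = n" using z_def by simp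
    fix i assume i: "i < n"
    show "z ! i \<in> Rt" using zi[OF i] inRt by simp
    show "sg R D (if Suc i < n then z ! Suc i else Min Rt) \<le> z ! i"
    proof (cases "Suc i < n")
      case True
      have e: "n - 1 - i = Suc (n - 1 - Suc i)" using True by simp
      have "sg R D (z ! Suc i) = sg R (D + D * (n - 1 - Suc i)) b" using zi[OF True] by (simp add: funpow_add)
      also have "D + D * (n - 1 - Suc i) = D * (n - 1 - i)" using e by simp
      finally show ?thesis using True zi[OF i] by simp
    next
      case False
      then have "n - 1 - i = 0" using i by simp
      then show ?thesis using False zi[OF i] b(2) by simp
    qed
  qed
  then show ?thesis by blast
qed

lemma tup_update:
  assumes z: "z \<in> tupSet R Rt n D" and r: "r \<in> Rt" and rz: "z ! 0 \<le> r" and n: "n \<ge> 1"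
  shows "z[0 := r] \<in> tupSet R Rt n D"
  unfolding tupSet_def
proof (intro CollectI conjI allI impI)
  have lz: "length z = n" using tup_len[OF z] .
  show "length (z[0 := r]) = n" using lz by simp
  fix i assume i: "i < n"
  show "z[0 := r] ! i \<in> Rt" using tup_inRt[OF z i] r lz i by (cases i) auto
  have st: "sg R D (if Suc i < n then z ! Suc i else Min Rt) \<le> z ! i"
    using z i unfolding tupSet_def by blast
  show "sg R D (if Suc i < n then z[0 := r] ! Suc i else Min Rt) \<le> z[0 := r] ! i"
  proof (cases i)
    case 0 then show ?thesis using st rz lz n by (cases "Suc 0 < n") auto
  next
    case (Suc j) then show ?thesis using st lz i by (cases "Suc i < n") auto
  qed
qed

lemma P_below:
  assumes inj: "\<forall>z\<in>tupSet R Rt (length As) D. \<forall>w\<in>tupSet R Rt (length As) D. z \<noteq> w \<longrightarrow> dotA R As z \<noteq> dotA R As w"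
    and ex: "\<exists>w\<in>tupSet R Rt (length As) D. dotA R As w < y"
  shows "Pdelta R Rt As D y \<in> tupSet R Rt (length As) D \<and> dotA R As (Pdelta R Rt As D y) < y \<and>
    (\<forall>w\<in>tupSet R Rt (length As) D. dotA R As w < y \<longrightarrow> dotA R As w \<le> dotA R As (Pdelta R Rt As D y))"
proof -
  let ?S = "tupSet R Rt (length As) D"
  let ?f = "dotA R As"
  let ?Q = "\<lambda>z. z \<in> ?S \<and> ?f z < y \<and> (\<forall>w\<in>?S. ?f w < y \<longrightarrow> ?f w \<le> ?f z)"
  obtain w0 where w0: "w0 \<in> ?S \<and> ?f w0 < y" using ex by blast
  obtain z where z: "z \<in> ?S \<and> ?f z < y" and zm: "\<forall>w. w \<in> ?S \<and> ?f w < y \<longrightarrow> nat (y - ?f z) \<le> nat (y - ?f w)"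
    using ex_has_least_nat[of "\<lambda>w. w \<in> ?S \<and> ?f w < y" w0 "\<lambda>w. nat (y - ?f w)", OF w0] by blast
  have Qz: "?Q z"
  proof (intro conjI ballI impI)
    fix w assume "w \<in> ?S" "?f w < y"
    then have "nat (y - ?f z) \<le> nat (y - ?f w)" using zm by blast
    then show "?f w \<le> ?f z" using z \<open>?f w < y\<close> by simp
  qed (use z in auto)
  have uniq: "z' = z" if "?Q z'" for z'
  proof -
    have "?f z' \<le> ?f z" using that Qz by blast
    moreover have "?f z \<le> ?f z'" using that Qz by blast
    ultimately have "?f z' = ?f z" by simp
    then show ?thesis using inj that Qz by blast
  qed
  have "(THE z. ?Q z) = z" using Qz uniq by (rule the_equality)
  moreover have "Pdelta R Rt As D y = (THE z. ?Q z)"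
    unfolding Pdelta_def Let_def using ex by simp
  ultimately show ?thesis using Qz by simp
qed

lemma P_none:
  assumes inj: "\<forall>z\<in>tupSet R Rt (length As) D. \<forall>w\<in>tupSet R Rt (length As) D. z \<noteq> w \<longrightarrow> dotA R As z \<noteq> dotA R As w"
    and nex: "\<not> (\<exists>w\<in>tupSet R Rt (length As) D. dotA R As w < y)"
    and mn: "\<exists>z\<in>tupSet R Rt (length As) D. \<forall>w\<in>tupSet R Rt (length As) D. dotA R As z \<le> dotA R As w"
  shows "Pdelta R Rt As D y \<in> tupSet R Rt (length As) D \<and>
    (\<forall>w\<in>tupSet R Rt (length As) D. dotA R As (Pdelta R Rt As D y) \<le> dotA R As w)"
proof -
  let ?S = "tupSet R Rt (length As) D"
  let ?f = "dotA R As"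
  let ?Q = "\<lambda>z. z \<in> ?S \<and> (\<forall>w\<in>?S. ?f z \<le> ?f w)"
  obtain z where Qz: "?Q z" using mn by blast
  have uniq: "z' = z" if "?Q z'" for z'
  proof -
    have "?f z' \<le> ?f z" using that Qz by blast
    moreover have "?f z \<le> ?f z'" using that Qz by blast
    ultimately have "?f z' = ?f z" by simp
    then show ?thesis using inj that Qz by blast
  qed
  have "(THE z. ?Q z) = z" using Qz uniq by (rule the_equality)
  moreover have "Pdelta R Rt As D y = (THE z. ?Q z)"
    unfolding Pdelta_def Let_def using nex by simp
  ultimately show ?thesis using Qz by simp
qed

lemma P1_nth: "Pdelta R Rt As D y \<in> tupSet R Rt n D \<Longrightarrow> n \<ge> 1 \<Longrightarrow> P1delta R Rt As D y = Pdelta R Rt As D y ! 0"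
  unfolding P1delta_def using tup_len by (metis hd_conv_nth list.size(3) not_one_le_zero)

lemma dotA_neg: "dotA R (map (map uminus) As) z = - dotA R As z"
  unfolding dotA_def by (simp add: op_neg sum_negf)




lemma pos_pkg:
  assumes R: "infinite R" and sp: "sparse R" and sd: "sub_d Rt d R" and d: "d \<ge> 1"
    and n: "length As = n" and n1: "n \<ge> 1" and nz: "\<forall>i<n. \<not> opZero R (As ! i)"
    and pos: "opPos R (As ! 0)"
  shows "\<exists>D0. \<forall>D. D \<ge> D0 \<and> d dvd D \<longrightarrow> (\<exists>\<Lambda>::nat. \<forall>s t x :: int.
     (s \<le> t \<and> t < x - Inf (dotA R As ` tupSet R Rt n D)) \<longrightarrow>
       ((\<exists>\<delta>\<le>\<Lambda>. P1delta R Rt As D (x - s) = (succR R ^^ \<delta>) (P1delta R Rt As D (x - t))) \<or>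
        (\<exists>\<epsilon>\<le>\<Lambda>. P1delta R Rt As D (x - s) = (succR R ^^ \<epsilon>) (P1delta R Rt As D (t - s)))))"
proof -
  have Rt: "Rt \<subseteq> R" using Rt_sub[OF R sd] .
  obtain D0s where st: "\<forall>D\<ge>D0s.
     (\<forall>z\<in>tupSet R Rt n D. \<forall>w\<in>tupSet R Rt n D. z \<noteq> w \<longrightarrow> dotA R As z \<noteq> dotA R As w) \<and>
     (\<forall>z\<in>tupSet R Rt n D. \<forall>w\<in>tupSet R Rt n D. z ! 0 < w ! 0 \<longrightarrow> dotA R As z < dotA R As w) \<and>
     (\<forall>z\<in>tupSet R Rt n D. opApp R (As!0) (z!0) < 2 * dotA R As z \<and> 2 * dotA R As z < 3 * opApp R (As!0) (z!0))"
    using struct[OF R sp Rt n nz pos n1] by blast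
  obtain T where T: "\<forall>x\<in>R. \<forall>y\<in>R. T \<le> x \<longrightarrow> x < y \<longrightarrow> opApp R (As!0) x < opApp R (As!0) y"
    using pos_mono[OF R sp pos] by blast
  define K where "K = coefsum (As ! 0)"
  define m where "m = length (As ! 0)"
  obtain E where E: "\<forall>E'\<ge>E. \<forall>v\<in>R. opApp R (As!0) (sg R E' v) > int (6 * nat K) * int (sg R m v)"
    using dom[OF R sp pos] by blast
  have KI: "int (nat K) = K" using coefsum_nonneg K_def by simp
  show ?thesis
  proof (rule exI, intro allI impI)
    fix D assume DD: "max D0s T \<le> D \<and> d dvd D"
    define S where "S = tupSet R Rt n D"
    define f where "f = dotA R As"
    define A where "A = opApp R (As ! 0)"
    define P where "P = Pdelta R Rt As D"
    have inj: "\<forall>z\<in>S. \<forall>w\<in>S. z \<noteq> w \<longrightarrow> f z \<noteq> f w"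
      and ord: "\<forall>z\<in>S. \<forall>w\<in>S. z ! 0 < w ! 0 \<longrightarrow> f z < f w"
      and bnd: "\<forall>z\<in>S. A (z!0) < 2 * f z \<and> 2 * f z < 3 * A (z!0)"
    proof -
      have "D0s \<le> D" using DD by simp
      note c = st[rule_format, OF this]
      show "\<forall>z\<in>S. \<forall>w\<in>S. z \<noteq> w \<longrightarrow> f z \<noteq> f w" using c unfolding S_def f_def by (rule conjunct1)
      show "\<forall>z\<in>S. \<forall>w\<in>S. z ! 0 < w ! 0 \<longrightarrow> f z < f w" using c unfolding S_def f_def by (rule conjunct2[THEN conjunct1])
      show "\<forall>z\<in>S. A (z!0) < 2 * f z \<and> 2 * f z < 3 * A (z!0)" using c unfolding S_def f_def A_def by (rule conjunct2[THEN conjunct2])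
    qed
    have fpos: "f z > 0" if "z \<in> S" for z
    proof -
      have "A (z!0) < 2 * f z \<and> 2 * f z < 3 * A (z!0)" using bnd that by blast
      then show ?thesis by linarith
    qed
    obtain z0 where z0: "z0 \<in> S" using tup_nonempty[OF R sd d] DD S_def by blast
    obtain zmin where zmin: "zmin \<in> S" "\<forall>w. w \<in> S \<longrightarrow> nat (f zmin) \<le> nat (f w)"
      using ex_has_least_nat[of "\<lambda>w. w \<in> S" z0 "\<lambda>w. nat (f w)"] z0 by blast
    have mn: "\<exists>z\<in>S. \<forall>w\<in>S. f z \<le> f w"
    proof (intro bexI[OF _ zmin(1)] ballI)
      fix w assume "w \<in> S" then show "f zmin \<le> f w" using zmin fpos by force
    qed
    have PB: "P y \<in> S \<and> f (P y) < y \<and> (\<forall>w\<in>S. f w < y \<longrightarrow> f w \<le> f (P y))" if "\<exists>w\<in>S. f w < y" for y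
      using P_below[of R Rt As D y, unfolded n, OF inj[unfolded S_def f_def] that[unfolded S_def f_def]] unfolding S_def f_def P_def .
    have PN: "P y \<in> S \<and> (\<forall>w\<in>S. f (P y) \<le> f w)" if "\<not> (\<exists>w\<in>S. f w < y)" for y
      using P_none[of R Rt As D y, unfolded n, OF inj[unfolded S_def f_def] that[unfolded S_def f_def] mn[unfolded S_def f_def]] unfolding S_def f_def P_def .
    have PS: "P y \<in> S" for y using PB PN by blast
    have P1: "P1delta R Rt As D y = P y ! 0" for y using P1_nth[of R Rt As D y n] PS n1 unfolding S_def P_def by blast
    have n0: "0 < n" using n1 by simp
    have Sn: "z \<in> S \<Longrightarrow> z ! 0 \<in> R" "z \<in> S \<Longrightarrow> z ! 0 \<in> Rt" "z \<in> S \<Longrightarrow> D \<le> z ! 0" for z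
      unfolding S_def using tup_in[OF Rt _ n0] tup_inRt[OF _ n0] tup_ge[OF R _ n0] by auto
    have upd: "z[0 := sg R d (z ! 0)] \<in> S \<and> z[0 := sg R d (z ! 0)] ! 0 = sg R d (z ! 0)" if z: "z \<in> S" for z
    proof
      have "sg R (d * 1) (z ! 0) \<in> Rt" using Rt_step[OF R sd Sn(2)[OF z]] .
      moreover have "z ! 0 \<le> sg R d (z ! 0)" using sg_ge[OF R, of "z ! 0" d] by simp
      ultimately show "z[0 := sg R d (z ! 0)] \<in> S" using tup_update[of z R Rt n D] z n1 unfolding S_def by simp
      show "z[0 := sg R d (z ! 0)] ! 0 = sg R d (z ! 0)" using tup_len[of z R Rt n D] z n1 S_def by simp
    qed
    have brk: "y \<le> f ((P y)[0 := sg R d (P y ! 0)])" for y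
    proof -
      let ?w = "(P y)[0 := sg R d (P y ! 0)]"
      have w: "?w \<in> S" "?w ! 0 = sg R d (P y ! 0)" using upd[OF PS] by auto
      have "P y ! 0 < sg R d (P y ! 0)" using sg_lt_exp[OF R, of 0 d] d by simp
      then have lt: "f (P y) < f ?w" using ord PS w by simp
      show ?thesis
      proof (cases "\<exists>w\<in>S. f w < y")
        case True
        then show ?thesis using PB[OF True] w lt by force
      next
        case False then show ?thesis using w by force
      qed
    qed
    have fmono: "f (P y) \<le> f (P y')" if "y \<le> y'" for y y'
    proof (cases "\<exists>w\<in>S. f w < y")
      case True
      then have ex': "\<exists>w\<in>S. f w < y'" using that by force
      have a: "P y \<in> S" "f (P y) < y'" using PB[OF True] that by auto
      have c: "\<forall>w\<in>S. f w < y' \<longrightarrow> f w \<le> f (P y')" using PB[OF ex'] by (rule conjunct2[THEN conjunct2])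
      show ?thesis using c[rule_format, OF a(1) a(2)] .
    next
      case False then show ?thesis using PN PS by blast
    qed
    have p1mono: "P y ! 0 \<le> P y' ! 0" if "y \<le> y'" for y y'
    proof (rule ccontr)
      assume "\<not> P y ! 0 \<le> P y' ! 0"
      then have "f (P y') < f (P y)" using ord PS by simp
      then show False using fmono[OF that] by simp
    qed
    have Amono: "A u \<le> A v" if "u \<in> R" "v \<in> R" "T \<le> u" "u \<le> v" for u v
      using pos_mono_le[OF T that] unfolding A_def .
    show "\<exists>\<Lambda>::nat. \<forall>s t x :: int.
     (s \<le> t \<and> t < x - Inf (dotA R As ` tupSet R Rt n D)) \<longrightarrow>
       ((\<exists>\<delta>\<le>\<Lambda>. P1delta R Rt As D (x - s) = (succR R ^^ \<delta>) (P1delta R Rt As D (x - t))) \<or>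
        (\<exists>\<epsilon>\<le>\<Lambda>. P1delta R Rt As D (x - s) = (succR R ^^ \<epsilon>) (P1delta R Rt As D (t - s))))"
    proof (intro exI[of _ "E + d"] allI impI)
      fix s t x :: int
      assume h: "s \<le> t \<and> t < x - Inf (dotA R As ` tupSet R Rt n D)"
      define a where "a = x - t"
      define b where "b = t - s"
      have b0: "0 \<le> b" using h b_def by simp
      have ia: "Inf (f ` S) < a" using h unfolding a_def f_def S_def by linarith
      have ne: "f ` S \<noteq> {}" using z0 by blast
      have bd: "bdd_below (f ` S)"
      proof (rule bdd_belowI[of _ 0])
        fix v assume "v \<in> f ` S"
        then obtain z where "z \<in> S" "v = f z" by blast
        then show "0 \<le> v" using fpos[of z] by simp
      qed
      have "\<exists>v\<in>f ` S. v < a" using cInf_less_iff[OF ne bd, of a] ia by simp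
      then obtain w0 where w0: "w0 \<in> S" "f w0 < a" by blast
      have a0: "0 < a" using fpos[OF w0(1)] w0(2) by simp
      have exab: "\<exists>w\<in>S. f w < a + b" using w0 b0 by (intro bexI[of _ w0]) simp_all
      have PBab: "f (P (a + b)) < a + b" using PB[OF exab] by blast
      define p where "p = P a ! 0"
      define q where "q = P b ! 0"
      define r where "r = P (a + b) ! 0"
      define M where "M = max p q"
      have pr: "p \<le> r" using p1mono[of a "a + b"] b0 p_def r_def by simp
      have qr: "q \<le> r" using p1mono[of b "a + b"] a0 q_def r_def by simp
      have pR: "p \<in> R" "p \<in> Rt" "D \<le> p" unfolding p_def using Sn[OF PS[of a]] by auto
      have qR: "q \<in> R" "q \<in> Rt" "D \<le> q" unfolding q_def using Sn[OF PS[of b]] by auto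
      have rR: "r \<in> R" "D \<le> r" unfolding r_def using Sn[OF PS[of "a+b"]] by auto
      have MR: "M \<in> R" "D \<le> M" "p \<le> M" "q \<le> M" unfolding M_def using pR qR by (simp_all add: max_def)
      have TD: "T \<le> D" using DD by simp
      have ba: "2 * a < 3 * A (sg R d p)"
      proof -
        have w: "(P a)[0 := sg R d p] \<in> S" "(P a)[0 := sg R d p] ! 0 = sg R d p"
          using upd[OF PS[of a]] unfolding p_def by auto
        have "A (((P a)[0 := sg R d p]) ! 0) < 2 * f ((P a)[0 := sg R d p]) \<and> 2 * f ((P a)[0 := sg R d p]) < 3 * A (((P a)[0 := sg R d p]) ! 0)"
          using bnd w(1) by blast
        then have "2 * f ((P a)[0 := sg R d p]) < 3 * A (sg R d p)" unfolding w(2) by blast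
        moreover have "a \<le> f ((P a)[0 := sg R d p])" using brk[of a] unfolding p_def .
        ultimately show ?thesis by linarith
      qed
      have bb: "2 * b < 3 * A (sg R d q)"
      proof -
        have w: "(P b)[0 := sg R d q] \<in> S" "(P b)[0 := sg R d q] ! 0 = sg R d q"
          using upd[OF PS[of b]] unfolding q_def by auto
        have "A (((P b)[0 := sg R d q]) ! 0) < 2 * f ((P b)[0 := sg R d q]) \<and> 2 * f ((P b)[0 := sg R d q]) < 3 * A (((P b)[0 := sg R d q]) ! 0)"
          using bnd w(1) by blast
        then have "2 * f ((P b)[0 := sg R d q]) < 3 * A (sg R d q)" unfolding w(2) by blast
        moreover have "b \<le> f ((P b)[0 := sg R d q])" using brk[of b] unfolding q_def .
        ultimately show ?thesis by linarith
      qed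
      have "A (sg R d p) \<le> A (sg R d M)"
        using Amono[OF sg_in[OF R pR(1)] sg_in[OF R MR(1)]] sg_ge[OF R, of p d] sg_mono[OF R MR(3)] pR TD by simp
      moreover have "A (sg R d q) \<le> A (sg R d M)"
        using Amono[OF sg_in[OF R qR(1)] sg_in[OF R MR(1)]] sg_ge[OF R, of q d] sg_mono[OF R MR(4)] qR TD by simp
      moreover have "A r < 2 * f (P (a + b))" using bnd PS[of "a + b"] unfolding r_def by blast
      ultimately have Ar: "A r < 6 * A (sg R d M)" using ba bb PBab by linarith
      have Ab: "A (sg R d M) \<le> K * int (sg R m (sg R d M))"
      proof -
        have "\<bar>A (sg R d M)\<bar> \<le> K * int (sg R m (sg R d M))"
          using op_bound[OF R, of "As ! 0" m] unfolding A_def K_def m_def by blast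
        then show ?thesis by linarith
      qed
      have rle: "r \<le> sg R (E + d) M"
      proof (rule ccontr)
        assume "\<not> r \<le> sg R (E + d) M"
        then have le: "sg R (E + d) M \<le> r" by simp
        have "T \<le> sg R (E + d) M" using sg_ge[OF R, of M "E + d"] MR TD by simp
        then have "A (sg R (E + d) M) \<le> A r" using Amono[OF sg_in[OF R MR(1)] rR(1)] le by simp
        moreover have "sg R (E + d) M = sg R E (sg R d M)" by (simp add: funpow_add)
        moreover have "A (sg R E (sg R d M)) > int (6 * nat K) * int (sg R m (sg R d M))"
          using E sg_in[OF R MR(1)] unfolding A_def by blast
        ultimately have "A (sg R (E + d) M) > K * 6 * int (sg R m (sg R d M))" using KI by (simp add: algebra_simps)
        then have "A (sg R (E + d) M) > 6 * A (sg R d M)" using Ab by linarith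
        then show False using Ar \<open>A (sg R (E + d) M) \<le> A r\<close> by linarith
      qed
      have Mr: "M \<le> r" unfolding M_def using pr qr by simp
      obtain k where k: "k \<le> E + d" "r = sg R k M" using R_steps_le[OF R MR(1) rR(1) Mr rle] by blast
      have e1: "P1delta R Rt As D (x - s) = r" using P1 r_def a_def b_def by simp
      have e2: "P1delta R Rt As D (x - t) = p" using P1 p_def a_def by simp
      have e3: "P1delta R Rt As D (t - s) = q" using P1 q_def b_def by simp
      show "(\<exists>\<delta>\<le>E + d. P1delta R Rt As D (x - s) = (succR R ^^ \<delta>) (P1delta R Rt As D (x - t))) \<or>
        (\<exists>\<epsilon>\<le>E + d. P1delta R Rt As D (x - s) = (succR R ^^ \<epsilon>) (P1delta R Rt As D (t - s)))"
      proof (cases "q \<le> p")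
        case True
        then have "M = p" using M_def by simp
        then show ?thesis using k e1 e2 by blast
      next
        case False
        then have "M = q" using M_def by simp
        then show ?thesis using k e1 e3 by blast
      qed
    qed
  qed
qed




lemma neg_pkg:
  assumes R: "infinite R" and sp: "sparse R" and sd: "sub_d Rt d R" and d: "d \<ge> 1"
    and n: "length As = n" and n1: "n \<ge> 1" and nz: "\<forall>i<n. \<not> opZero R (As ! i)"
    and neg: "opNeg R (As ! 0)"
  shows "\<exists>D0. \<forall>D. D \<ge> D0 \<and> d dvd D \<longrightarrow> (\<exists>\<Lambda>::nat. \<forall>s t x :: int.
     (s \<ge> t \<and> t > x - Sup (dotA R As ` tupSet R Rt n D)) \<longrightarrow>
       ((\<exists>\<delta>\<le>\<Lambda>. P1delta R Rt As D (x - s) = (succR R ^^ \<delta>) (P1delta R Rt As D (x - t))) \<or>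
        (\<exists>\<epsilon>\<le>\<Lambda>. P1delta R Rt As D (x - s) = (succR R ^^ \<epsilon>) (P1delta R Rt As D (t - s)))))"
proof -
  have Rt: "Rt \<subseteq> R" using Rt_sub[OF R sd] .
  define As' where "As' = map (map uminus) As"
  have n': "length As' = n" using n As'_def by simp
  have n0: "0 < n" using n1 by simp
  have nz': "\<forall>i<n. \<not> opZero R (As' ! i)" using nz n unfolding As'_def by (simp add: opZero_neg)
  have pos': "opPos R (As' ! 0)" using neg n0 n unfolding As'_def by (simp add: opPos_neg)
  have fneg: "dotA R As' z = - dotA R As z" for z unfolding As'_def by (rule dotA_neg)
  obtain D0s where st: "\<forall>D\<ge>D0s.
     (\<forall>z\<in>tupSet R Rt n D. \<forall>w\<in>tupSet R Rt n D. z \<noteq> w \<longrightarrow> dotA R As' z \<noteq> dotA R As' w) \<and>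
     (\<forall>z\<in>tupSet R Rt n D. \<forall>w\<in>tupSet R Rt n D. z ! 0 < w ! 0 \<longrightarrow> dotA R As' z < dotA R As' w) \<and>
     (\<forall>z\<in>tupSet R Rt n D. opApp R (As'!0) (z!0) < 2 * dotA R As' z \<and> 2 * dotA R As' z < 3 * opApp R (As'!0) (z!0))"
    using struct[OF R sp Rt n' nz' pos' n1] by blast
  obtain T where T: "\<forall>x\<in>R. \<forall>y\<in>R. T \<le> x \<longrightarrow> x < y \<longrightarrow> opApp R (As'!0) x < opApp R (As'!0) y"
    using pos_mono[OF R sp pos'] by blast
  define K where "K = coefsum (As' ! 0)"
  define m where "m = length (As' ! 0)"
  obtain E where E: "\<forall>E'\<ge>E. \<forall>v\<in>R. opApp R (As'!0) (sg R E' v) > int (6 * nat K) * int (sg R m v)"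
    using dom[OF R sp pos'] by blast
  obtain E1 where E1: "\<forall>E'\<ge>E1. \<forall>v\<in>R. opApp R (As'!0) (sg R E' v) > int 1 * int (sg R 0 v)"
    using dom[OF R sp pos'] by blast
  have KI: "int (nat K) = K" using coefsum_nonneg K_def by simp
  show ?thesis
  proof (rule exI, intro allI impI)
    fix D assume DD: "max D0s T \<le> D \<and> d dvd D"
    define S where "S = tupSet R Rt n D"
    define f where "f = dotA R As"
    define f' where "f' = dotA R As'"
    define A where "A = opApp R (As' ! 0)"
    define P where "P = Pdelta R Rt As D"
    have inj': "\<forall>z\<in>S. \<forall>w\<in>S. z \<noteq> w \<longrightarrow> f' z \<noteq> f' w"
      and ord': "\<forall>z\<in>S. \<forall>w\<in>S. z ! 0 < w ! 0 \<longrightarrow> f' z < f' w"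
      and bnd: "\<forall>z\<in>S. A (z!0) < 2 * f' z \<and> 2 * f' z < 3 * A (z!0)"
    proof -
      have "D0s \<le> D" using DD by simp
      note c = st[rule_format, OF this]
      show "\<forall>z\<in>S. \<forall>w\<in>S. z \<noteq> w \<longrightarrow> f' z \<noteq> f' w" using c unfolding S_def f'_def by (rule conjunct1)
      show "\<forall>z\<in>S. \<forall>w\<in>S. z ! 0 < w ! 0 \<longrightarrow> f' z < f' w" using c unfolding S_def f'_def by (rule conjunct2[THEN conjunct1])
      show "\<forall>z\<in>S. A (z!0) < 2 * f' z \<and> 2 * f' z < 3 * A (z!0)" using c unfolding S_def f'_def A_def by (rule conjunct2[THEN conjunct2])
    qed
    have ff: "f' z = - f z" for z unfolding f_def f'_def by (rule fneg)
    have inj: "\<forall>z\<in>S. \<forall>w\<in>S. z \<noteq> w \<longrightarrow> f z \<noteq> f w"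
    proof (intro ballI impI)
      fix z w assume "z \<in> S" "w \<in> S" "z \<noteq> w"
      then have "f' z \<noteq> f' w" using inj' by blast
      then show "f z \<noteq> f w" using ff by simp
    qed
    have ord: "f w < f z" if "z \<in> S" "w \<in> S" "z ! 0 < w ! 0" for z w
    proof -
      have "f' z < f' w" using ord' that by blast
      then show ?thesis using ff by simp
    qed
    have bz: "A (z!0) < 2 * f' z" "2 * f' z < 3 * A (z!0)" if "z \<in> S" for z
      using bnd that by blast+
    have fpos: "f' z > 0" if "z \<in> S" for z using bz[OF that] by linarith
    obtain z0 where z0: "z0 \<in> S" using tup_nonempty[OF R sd d] DD S_def by blast
    have Sn: "z \<in> S \<Longrightarrow> z ! 0 \<in> R" "z \<in> S \<Longrightarrow> z ! 0 \<in> Rt" "z \<in> S \<Longrightarrow> D \<le> z ! 0" for z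
      unfolding S_def using tup_in[OF Rt _ n0] tup_inRt[OF _ n0] tup_ge[OF R _ n0] by auto
    have upd: "z[0 := r] \<in> S \<and> z[0 := r] ! 0 = r" if z: "z \<in> S" and r: "r \<in> Rt" "z ! 0 \<le> r" for z r
    proof
      show "z[0 := r] \<in> S" using tup_update[of z R Rt n D r] z r n1 unfolding S_def by simp
      show "z[0 := r] ! 0 = r" using tup_len[of z R Rt n D] z n1 S_def by simp
    qed
    have exb: "\<exists>w\<in>S. f w < y" for y
    proof -
      define k where "k = E1 + 2 * nat \<bar>y\<bar> + 2"
      define r where "r = sg R (d * k) (z0 ! 0)"
      have rRt: "r \<in> Rt" using Rt_step[OF R sd Sn(2)[OF z0]] r_def by simp
      have rge: "z0 ! 0 \<le> r" using sg_ge[OF R, of "z0 ! 0" "d * k"] r_def by simp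
      have w: "z0[0 := r] \<in> S" "z0[0 := r] ! 0 = r" using upd[OF z0 rRt rge] by auto
      have kk: "k \<le> d * k" using d by simp
      define v where "v = sg R (d * k - E1) (z0 ! 0)"
      have rv: "r = sg R E1 v" unfolding r_def v_def
      proof -
        have "d * k = E1 + (d * k - E1)" using kk k_def by simp
        then show "sg R (d * k) (z0 ! 0) = sg R E1 (sg R (d * k - E1) (z0 ! 0))"
          by (metis funpow_add comp_apply)
      qed
      have vR: "v \<in> R" using sg_in[OF R Sn(1)[OF z0]] v_def by simp
      have "d * k - E1 \<le> v" using sg_ge[OF R, of "z0 ! 0" "d * k - E1"] v_def by simp
      moreover have "k - E1 \<le> d * k - E1" using kk by (rule diff_le_mono)
      moreover have "k - E1 = 2 * nat \<bar>y\<bar> + 2" unfolding k_def by simp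
      ultimately have vbig: "2 * nat \<bar>y\<bar> + 2 \<le> v" by linarith
      have "A r > int 1 * int (sg R 0 v)" using E1 vR rv unfolding A_def by blast
      then have "A r > int v" by simp
      moreover have "A r < 2 * f' (z0[0 := r])" using bz(1)[OF w(1)] w(2) by simp
      ultimately have "2 * f' (z0[0 := r]) > 2 * \<bar>y\<bar> + 2" using vbig by linarith
      then have "f (z0[0 := r]) < y" using ff[of "z0[0 := r]"] by linarith
      then show ?thesis using w(1) by blast
    qed
    have PB: "P y \<in> S \<and> f (P y) < y \<and> (\<forall>w\<in>S. f w < y \<longrightarrow> f w \<le> f (P y))" for y
      using P_below[of R Rt As D y, unfolded n, OF inj[unfolded S_def f_def] exb[unfolded S_def f_def]] unfolding S_def f_def P_def .
    have PS: "P y \<in> S" for y using PB by blast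
    have P1: "P1delta R Rt As D y = P y ! 0" for y using P1_nth[of R Rt As D y n] PS n1 unfolding S_def P_def by blast
    have p1anti: "P y' ! 0 \<le> P y ! 0" if "y \<le> y'" for y y'
    proof (rule ccontr)
      assume "\<not> P y' ! 0 \<le> P y ! 0"
      then have "f (P y') < f (P y)" using ord[OF PS PS] by simp
      moreover have "f (P y) \<le> f (P y')"
      proof -
        have c: "\<forall>w\<in>S. f w < y' \<longrightarrow> f w \<le> f (P y')" using PB by blast
        have "f (P y) < y'" using PB[of y] that by linarith
        then show ?thesis using c PS by blast
      qed
      ultimately show False by simp
    qed
    have Amono: "A u \<le> A v" if "u \<in> R" "v \<in> R" "T \<le> u" "u \<le> v" for u v
      using pos_mono_le[OF T that] unfolding A_def .
    have ne: "f ` S \<noteq> {}" using z0 by blast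
    have sup0: "Sup (f ` S) \<le> 0"
    proof (rule cSup_least[OF ne])
      fix v assume "v \<in> f ` S"
      then obtain z where "z \<in> S" "v = f z" by blast
      then show "v \<le> 0" using fpos[of z] ff[of z] by simp
    qed
    show "\<exists>\<Lambda>::nat. \<forall>s t x :: int.
     (s \<ge> t \<and> t > x - Sup (dotA R As ` tupSet R Rt n D)) \<longrightarrow>
       ((\<exists>\<delta>\<le>\<Lambda>. P1delta R Rt As D (x - s) = (succR R ^^ \<delta>) (P1delta R Rt As D (x - t))) \<or>
        (\<exists>\<epsilon>\<le>\<Lambda>. P1delta R Rt As D (x - s) = (succR R ^^ \<epsilon>) (P1delta R Rt As D (t - s))))"
    proof (intro exI[of _ "d * E"] allI impI)
      fix s t x :: int
      assume h: "s \<ge> t \<and> t > x - Sup (dotA R As ` tupSet R Rt n D)"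
      define a where "a = x - t"
      define b where "b = t - s"
      have b0: "b \<le> 0" using h b_def by simp
      have "a < Sup (f ` S)" using h unfolding a_def f_def S_def by linarith
      then have a0: "a \<le> 0" using sup0 by linarith
      define p where "p = P a ! 0"
      define q where "q = P b ! 0"
      define r where "r = P (a + b) ! 0"
      define M where "M = max p q"
      have pr: "p \<le> r" using p1anti[of "a + b" a] b0 p_def r_def by simp
      have qr: "q \<le> r" using p1anti[of "a + b" b] a0 q_def r_def by simp
      have pR: "p \<in> R" "p \<in> Rt" "D \<le> p" unfolding p_def using Sn[OF PS[of a]] by auto
      have qR: "q \<in> R" "q \<in> Rt" "D \<le> q" unfolding q_def using Sn[OF PS[of b]] by auto
      have rR: "r \<in> R" "D \<le> r" unfolding r_def using Sn[OF PS[of "a+b"]] by auto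
      have MR: "M \<in> R" "M \<in> Rt" "D \<le> M" "p \<le> M" "q \<le> M" unfolding M_def using pR qR by (simp_all add: max_def)
      have TD: "T \<le> D" using DD by simp
      have ba: "- 2 * a < 3 * A p"
      proof -
        have "f (P a) < a" using PB by blast
        moreover have "2 * f' (P a) < 3 * A p" using bz(2)[OF PS[of a]] p_def by simp
        ultimately show ?thesis using ff[of "P a"] by linarith
      qed
      have bb: "- 2 * b < 3 * A q"
      proof -
        have "f (P b) < b" using PB by blast
        moreover have "2 * f' (P b) < 3 * A q" using bz(2)[OF PS[of b]] q_def by simp
        ultimately show ?thesis using ff[of "P b"] by linarith
      qed
      have "A p \<le> A M" using Amono[OF pR(1) MR(1)] pR(3) MR(4) TD by simp
      moreover have "A q \<le> A M" using Amono[OF qR(1) MR(1)] qR(3) MR(5) TD by simp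
      ultimately have Ar: "- 2 * a - 2 * b < 6 * A M" using ba bb by linarith
      have Ab: "A M \<le> K * int (sg R m M)"
      proof -
        have "\<bar>A M\<bar> \<le> K * int (sg R m M)"
          using op_bound[OF R, of "As' ! 0" m] unfolding A_def K_def m_def by blast
        then show ?thesis by linarith
      qed
      have rle: "r \<le> sg R (d * E) M"
      proof (rule ccontr)
        assume "\<not> r \<le> sg R (d * E) M"
        then have lt: "sg R (d * E) M < r" by simp
        have rRt: "sg R (d * E) M \<in> Rt" using Rt_step[OF R sd MR(2)] .
        have "P a ! 0 \<le> sg R (d * E) M" using sg_ge[OF R, of M "d * E"] MR(4) p_def by simp
        then have w: "(P a)[0 := sg R (d * E) M] \<in> S" "(P a)[0 := sg R (d * E) M] ! 0 = sg R (d * E) M"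
          using upd[OF PS[of a] rRt] by auto
        have "E \<le> d * E" using d by simp
        then have "A (sg R (d * E) M) > int (6 * nat K) * int (sg R m M)" using E MR(1) unfolding A_def by blast
        then have "A (sg R (d * E) M) > K * 6 * int (sg R m M)" using KI by (simp add: algebra_simps)
        then have "A (sg R (d * E) M) > 6 * A M" using Ab by linarith
        moreover have "A (sg R (d * E) M) < 2 * f' ((P a)[0 := sg R (d * E) M])" using bz(1)[OF w(1)] w(2) by simp
        ultimately have "f ((P a)[0 := sg R (d * E) M]) < a + b" using Ar ff[of "(P a)[0 := sg R (d * E) M]"] by linarith
        then have "f ((P a)[0 := sg R (d * E) M]) \<le> f (P (a + b))" using PB[of "a + b"] w(1) by blast
        moreover have "f (P (a + b)) < f ((P a)[0 := sg R (d * E) M])" using ord[OF w(1) PS[of "a + b"]] w(2) lt r_def by simp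
        ultimately show False by simp
      qed
      have Mr: "M \<le> r" unfolding M_def using pr qr by simp
      obtain k where k: "k \<le> d * E" "r = sg R k M" using R_steps_le[OF R MR(1) rR(1) Mr rle] by blast
      have e1: "P1delta R Rt As D (x - s) = r" using P1 r_def a_def b_def by simp
      have e2: "P1delta R Rt As D (x - t) = p" using P1 p_def a_def by simp
      have e3: "P1delta R Rt As D (t - s) = q" using P1 q_def b_def by simp
      show "(\<exists>\<delta>\<le>d * E. P1delta R Rt As D (x - s) = (succR R ^^ \<delta>) (P1delta R Rt As D (x - t))) \<or>
        (\<exists>\<epsilon>\<le>d * E. P1delta R Rt As D (x - s) = (succR R ^^ \<epsilon>) (P1delta R Rt As D (t - s)))"
      proof (cases "q \<le> p")
        case True
        then have "M = p" using M_def by simp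
        then show ?thesis using k e1 e2 by blast
      next
        case False
        then have "M = q" using M_def by simp
        then show ?thesis using k e1 e3 by blast
      qed
    qed
  qed
qed


theorem mainTheorem15:
  fixes R Rt :: "nat set" and d n :: nat and As :: "int list list"
  assumes "infinite R" and "cong_periodic R" and "sparse R"
    and "d \<ge> 1" and "sub_d Rt d R"
    and "n \<ge> 1" and "length As = n" and "\<forall>i<n. \<not> opZero R (As ! i)"
  shows "\<exists>D0. \<forall>D. D \<ge> D0 \<and> d dvd D \<longrightarrow>
    (\<exists>\<Lambda>::nat. \<forall>s t x :: int.
       ((opPos R (As ! 0) \<and> s \<le> t \<and> t < x - Inf (dotA R As ` tupSet R Rt n D)) \<or>
        (opNeg R (As ! 0) \<and> s \<ge> t \<and> t > x - Sup (dotA R As ` tupSet R Rt n D)))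
       \<longrightarrow>
       ((\<exists>\<delta>\<le>\<Lambda>. P1delta R Rt As D (x - s) = (succR R ^^ \<delta>) (P1delta R Rt As D (x - t))) \<or>
        (\<exists>\<epsilon>\<le>\<Lambda>. P1delta R Rt As D (x - s) = (succR R ^^ \<epsilon>) (P1delta R Rt As D (t - s)))))"
proof -
  note R = assms(1) and sp = assms(3) and d = assms(4) and sd = assms(5) and n1 = assms(6)
    and n = assms(7) and nz = assms(8)
  show ?thesis
  proof (cases "opPos R (As ! 0)")
    case True
    obtain D0 where D0: "\<forall>D. D \<ge> D0 \<and> d dvd D \<longrightarrow> (\<exists>\<Lambda>::nat. \<forall>s t x :: int.
     (s \<le> t \<and> t < x - Inf (dotA R As ` tupSet R Rt n D)) \<longrightarrow>
       ((\<exists>\<delta>\<le>\<Lambda>. P1delta R Rt As D (x - s) = (succR R ^^ \<delta>) (P1delta R Rt As D (x - t))) \<or>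
        (\<exists>\<epsilon>\<le>\<Lambda>. P1delta R Rt As D (x - s) = (succR R ^^ \<epsilon>) (P1delta R Rt As D (t - s)))))"
      using pos_pkg[OF R sp sd d n n1 nz True] by blast
    show ?thesis
    proof (rule exI[of _ D0], intro allI impI)
      fix D assume DD: "D \<ge> D0 \<and> d dvd D"
      obtain \<Lambda> :: nat where L: "\<forall>s t x :: int.
     (s \<le> t \<and> t < x - Inf (dotA R As ` tupSet R Rt n D)) \<longrightarrow>
       ((\<exists>\<delta>\<le>\<Lambda>. P1delta R Rt As D (x - s) = (succR R ^^ \<delta>) (P1delta R Rt As D (x - t))) \<or>
        (\<exists>\<epsilon>\<le>\<Lambda>. P1delta R Rt As D (x - s) = (succR R ^^ \<epsilon>) (P1delta R Rt As D (t - s))))"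
        using D0[rule_format, OF DD] by (elim exE) blast
      show "\<exists>\<Lambda>::nat. \<forall>s t x :: int.
       ((opPos R (As ! 0) \<and> s \<le> t \<and> t < x - Inf (dotA R As ` tupSet R Rt n D)) \<or>
        (opNeg R (As ! 0) \<and> s \<ge> t \<and> t > x - Sup (dotA R As ` tupSet R Rt n D)))
       \<longrightarrow>
       ((\<exists>\<delta>\<le>\<Lambda>. P1delta R Rt As D (x - s) = (succR R ^^ \<delta>) (P1delta R Rt As D (x - t))) \<or>
        (\<exists>\<epsilon>\<le>\<Lambda>. P1delta R Rt As D (x - s) = (succR R ^^ \<epsilon>) (P1delta R Rt As D (t - s))))"
      proof (rule exI[of _ \<Lambda>], intro allI impI)
        fix s t x :: int
        assume H: "(opPos R (As ! 0) \<and> s \<le> t \<and> t < x - Inf (dotA R As ` tupSet R Rt n D)) \<or>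
        (opNeg R (As ! 0) \<and> s \<ge> t \<and> t > x - Sup (dotA R As ` tupSet R Rt n D))"
        have "\<not> opNeg R (As ! 0)" using pos_neg_excl[OF R True] by blast
        then have "s \<le> t \<and> t < x - Inf (dotA R As ` tupSet R Rt n D)" using H by blast
        from L[rule_format, OF this]
        show "(\<exists>\<delta>\<le>\<Lambda>. P1delta R Rt As D (x - s) = (succR R ^^ \<delta>) (P1delta R Rt As D (x - t))) \<or>
        (\<exists>\<epsilon>\<le>\<Lambda>. P1delta R Rt As D (x - s) = (succR R ^^ \<epsilon>) (P1delta R Rt As D (t - s)))" .
      qed
    qed
  next
    case False
    have "\<not> opZero R (As ! 0)" using nz n1 by simp
    then have neg: "opNeg R (As ! 0)" using sparse_S1[OF sp, of "As ! 0"] False by blast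
    obtain D0 where D0: "\<forall>D. D \<ge> D0 \<and> d dvd D \<longrightarrow> (\<exists>\<Lambda>::nat. \<forall>s t x :: int.
     (s \<ge> t \<and> t > x - Sup (dotA R As ` tupSet R Rt n D)) \<longrightarrow>
       ((\<exists>\<delta>\<le>\<Lambda>. P1delta R Rt As D (x - s) = (succR R ^^ \<delta>) (P1delta R Rt As D (x - t))) \<or>
        (\<exists>\<epsilon>\<le>\<Lambda>. P1delta R Rt As D (x - s) = (succR R ^^ \<epsilon>) (P1delta R Rt As D (t - s)))))"
      using neg_pkg[OF R sp sd d n n1 nz neg] by blast
    show ?thesis
    proof (rule exI[of _ D0], intro allI impI)
      fix D assume DD: "D \<ge> D0 \<and> d dvd D"
      obtain \<Lambda> :: nat where L: "\<forall>s t x :: int.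
     (s \<ge> t \<and> t > x - Sup (dotA R As ` tupSet R Rt n D)) \<longrightarrow>
       ((\<exists>\<delta>\<le>\<Lambda>. P1delta R Rt As D (x - s) = (succR R ^^ \<delta>) (P1delta R Rt As D (x - t))) \<or>
        (\<exists>\<epsilon>\<le>\<Lambda>. P1delta R Rt As D (x - s) = (succR R ^^ \<epsilon>) (P1delta R Rt As D (t - s))))"
        using D0[rule_format, OF DD] by (elim exE) blast
      show "\<exists>\<Lambda>::nat. \<forall>s t x :: int.
       ((opPos R (As ! 0) \<and> s \<le> t \<and> t < x - Inf (dotA R As ` tupSet R Rt n D)) \<or>
        (opNeg R (As ! 0) \<and> s \<ge> t \<and> t > x - Sup (dotA R As ` tupSet R Rt n D)))
       \<longrightarrow>
       ((\<exists>\<delta>\<le>\<Lambda>. P1delta R Rt As D (x - s) = (succR R ^^ \<delta>) (P1delta R Rt As D (x - t))) \<or>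
        (\<exists>\<epsilon>\<le>\<Lambda>. P1delta R Rt As D (x - s) = (succR R ^^ \<epsilon>) (P1delta R Rt As D (t - s))))"
      proof (rule exI[of _ \<Lambda>], intro allI impI)
        fix s t x :: int
        assume H: "(opPos R (As ! 0) \<and> s \<le> t \<and> t < x - Inf (dotA R As ` tupSet R Rt n D)) \<or>
        (opNeg R (As ! 0) \<and> s \<ge> t \<and> t > x - Sup (dotA R As ` tupSet R Rt n D))"
        have "s \<ge> t \<and> t > x - Sup (dotA R As ` tupSet R Rt n D)" using H False by blast
        from L[rule_format, OF this]
        show "(\<exists>\<delta>\<le>\<Lambda>. P1delta R Rt As D (x - s) = (succR R ^^ \<delta>) (P1delta R Rt As D (x - t))) \<or>
        (\<exists>\<epsilon>\<le>\<Lambda>. P1delta R Rt As D (x - s) = (succR R ^^ \<epsilon>) (P1delta R Rt As D (t - s)))" .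
      qed
    qed
  qed
qed

end
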